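(* Let $f:\mathbb{R}^d\to\mathbb{R}$ be $G$-Lipschitz and $L$-smooth, let $\alpha\in[0,1)$, $\beta\in(0,2)$, $\eta>0$, $r>0$, and let $\bm{g}_k,\bm{p}_k,\bm{x}_k$ be generated by HLF-SZO (defined in the context). Set $\tilde\beta:=1-|1-\beta|$ and suppose $$\theta:=1-\frac{4\eta^2d^2G^2(1+\alpha^2)}{\tilde\beta^2r^2(1-\alpha^2)^2}>0.$$ Then for every $T\ge1$, $$\sum_{k=1}^T\mathbb{E}\big[\|\bm{g}_k\|^2\big]\le \frac{25d}{4\theta\tilde\beta^2}\sum_{k=1}^T\mathbb{E}\big[\|\nabla f(\bm{x}_k)\|^2\big]+\frac{10Tr^2L^2d^2}{\theta\tilde\beta^2},$$ $$\sum_{k=1}^T\mathbb{E}\big[\|\bm{p}_k\|^2\big]\le \frac{2\eta^2(1+\alpha^2)}{(1-\alpha^2)^2}\sum_{k=1}^T\mathbb{E}\big[\|\bm{g}_k\|^2\big].$$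
   Context: $f$ is $G$-Lipschitz and $L$-smooth: $|f(\bm{x})-f(\bm{y})|\le G\|\bm{x}-\bm{y}\|$ and $\|\nabla f(\bm{x})-\nabla f(\bm{y})\|\le L\|\bm{x}-\bm{y}\|$ for all $\bm{x},\bm{y}$. HLF-SZO: let $\bm{u}_1,\bm{u}_2,\dots$ be i.i.d. uniformly distributed on the unit sphere $\mathbb{S}_{d-1}$. Given $\bm{x}_1\in\mathbb{R}^d$, set $\bm{x}_0=\bm{x}_1$, $\bm{p}_0=\bm{0}$, and for $k\ge1$: $z_1=\tfrac12\big(f(\bm{x}_1+r\bm{u}_1)-f(\bm{x}_1-r\bm{u}_1)\big)$, $z_k=(1-\beta)z_{k-1}+f(\bm{x}_k+r\bm{u}_k)-f(\bm{x}_{k-1}+r\bm{u}_{k-1})$ for $k>1$; $\bm{g}_k=\frac{d}{r}z_k\bm{u}_k$, $\bm{p}_k=\alpha\bm{p}_{k-1}+\eta\bm{g}_k$, $\bm{x}_{k+1}=\bm{x}_k-\bm{p}_k$. Expectations are over the random directions $\bm{u}_k$. *)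

theory Defs
  imports "HOL-Probability.Probability"
begin

text \<open>Uniform distribution on the unit sphere of a Euclidean space: the normalized
  surface measure, realised as the cone measure, i.e. the image of the uniform
  distribution on the unit ball under radial projection x \<mapsto> x / norm x.\<close>
definition uniform_sphere :: "'a::euclidean_space measure" where
  "uniform_sphere = distr (uniform_measure lborel (ball 0 1)) borel (\<lambda>x. x /\<^sub>R norm x)"

text \<open>HLF-SZO state at step k: (x_k, z_k, p_k), for k \<ge> 1; index 0 encodes
  x_0 = x_1 and p_0 = 0 (z_0 is a dummy value that is never used).\<close>
primrec hlf_state :: "('a::euclidean_space \<Rightarrow> real) \<Rightarrow> real \<Rightarrow> real \<Rightarrow> real \<Rightarrow> real
    \<Rightarrow> 'a \<Rightarrow> (nat \<Rightarrow> 'a) \<Rightarrow> nat \<Rightarrow> 'a \<times> real \<times> 'a" where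
  "hlf_state f \<alpha> \<beta> \<eta> r x1 u 0 = (x1, 0, 0)"
| "hlf_state f \<alpha> \<beta> \<eta> r x1 u (Suc k) =
     (let (x, z, p) = hlf_state f \<alpha> \<beta> \<eta> r x1 u k;
          x' = x - p;
          z' = (if k = 0 then (f (x' + r *\<^sub>R u 1) - f (x' - r *\<^sub>R u 1)) / 2
                else (1 - \<beta>) * z + f (x' + r *\<^sub>R u (Suc k)) - f (x + r *\<^sub>R u k));
          g = (real DIM('a) / r * z') *\<^sub>R u (Suc k);
          p' = \<alpha> *\<^sub>R p + \<eta> *\<^sub>R g
      in (x', z', p'))"

definition hlf_x where "hlf_x f \<alpha> \<beta> \<eta> r x1 u k = fst (hlf_state f \<alpha> \<beta> \<eta> r x1 u k)"
definition hlf_z where "hlf_z f \<alpha> \<beta> \<eta> r x1 u k = fst (snd (hlf_state f \<alpha> \<beta> \<eta> r x1 u k))"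
definition hlf_p where "hlf_p f \<alpha> \<beta> \<eta> r x1 u k = snd (snd (hlf_state f \<alpha> \<beta> \<eta> r x1 u k))"
definition hlf_g :: "('a::euclidean_space \<Rightarrow> real) \<Rightarrow> real \<Rightarrow> real \<Rightarrow> real \<Rightarrow> real
    \<Rightarrow> 'a \<Rightarrow> (nat \<Rightarrow> 'a) \<Rightarrow> nat \<Rightarrow> 'a" where
  "hlf_g f \<alpha> \<beta> \<eta> r x1 u k = (real DIM('a) / r * hlf_z f \<alpha> \<beta> \<eta> r x1 u k) *\<^sub>R u k"

end

theory Submission
  imports Defs
begin


lemma ball_emeas_ne0: "emeasure lborel (ball (0::'a::euclidean_space) 1) \<noteq> 0"
proof -
  have "measure lborel (ball (0::'a) 1) > 0" using content_ball_pos[of 1 "0::'a"] by simp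
  then show ?thesis by (metis measure_def enn2real_0 less_irrefl)
qed

lemma ball_emeas_fin: "emeasure lborel (ball (0::'a::euclidean_space) 1) \<noteq> \<infinity>"
  using emeasure_lborel_ball_finite[of 0 1] by (simp add: top.not_eq_extremum)

lemma prob_unif_ball: "prob_space (uniform_measure lborel (ball (0::'a::euclidean_space) 1))"
  by (rule prob_space_uniform_measure) (use ball_emeas_ne0 ball_emeas_fin in auto)

lemma prob_sphere: "prob_space (uniform_sphere :: 'a::euclidean_space measure)"
  unfolding uniform_sphere_def
  by (rule prob_space.prob_space_distr[OF prob_unif_ball]) simp

lemma sets_sphere[simp, measurable_cong]: "sets (uniform_sphere :: 'a::euclidean_space measure) = sets borel"
  by (simp add: uniform_sphere_def)

lemma space_sphere[simp]: "space (uniform_sphere :: 'a::euclidean_space measure) = UNIV"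
  by (simp add: uniform_sphere_def)

lemma AE_sphere: "AE u in (uniform_sphere :: 'a::euclidean_space measure). norm u = 1"
proof -
  have "AE x in uniform_measure lborel (ball (0::'a) 1). x \<noteq> 0"
    by (rule AE_uniform_measureI) (auto intro: AE_mp[OF AE_lborel_singleton[of 0]])
  then have "AE x in uniform_measure lborel (ball (0::'a) 1). norm (x /\<^sub>R norm x) = 1"
    by eventually_elim simp
  then show ?thesis unfolding uniform_sphere_def
    by (subst AE_distr_iff) auto
qed

lemma sphere_invariant:
  fixes T :: "'a::euclidean_space \<Rightarrow> 'a"
  assumes lin: "linear T" and nT: "\<And>x. norm (T x) = norm x"
    and pres: "distr lborel borel T = lborel"
  shows "distr uniform_sphere borel T = (uniform_sphere :: 'a measure)"
proof -
  let ?B = "ball (0::'a) 1"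
  let ?U = "uniform_measure lborel ?B"
  have Tm[measurable]: "T \<in> borel_measurable borel"
    using lin by (intro borel_measurable_continuous_onI linear_continuous_on linear_conv_bounded_linear[THEN iffD1])
  have "distr ?U borel T = ?U"
  proof (rule measure_eqI)
    fix A assume A: "A \<in> sets (distr ?U borel T)"
    then have A': "A \<in> sets borel" by simp
    have "emeasure (distr ?U borel T) A = emeasure ?U (T -` A)"
      using A' by (subst emeasure_distr) auto
    also have "\<dots> = emeasure lborel (?B \<inter> T -` A) / emeasure lborel ?B"
      using A' measurable_sets_borel[OF Tm A'] by (subst emeasure_uniform_measure) auto
    also have "?B \<inter> T -` A = T -` (?B \<inter> A)" using nT by auto
    also have "emeasure lborel (T -` (?B \<inter> A)) = emeasure (distr lborel borel T) (?B \<inter> A)"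
      using A' by (subst emeasure_distr) auto
    also have "\<dots> = emeasure lborel (?B \<inter> A)" by (simp add: pres)
    also have "emeasure lborel (?B \<inter> A) / emeasure lborel ?B = emeasure ?U A"
      using A' by (subst emeasure_uniform_measure) auto
    finally show "emeasure (distr ?U borel T) A = emeasure ?U A" .
  qed simp
  have nrmT: "(\<lambda>x. x /\<^sub>R norm x) \<circ> T = T \<circ> (\<lambda>x. x /\<^sub>R norm x)"
    using nT linear_scale[OF lin] by (auto simp: fun_eq_iff)
  have "distr uniform_sphere borel T = distr ?U borel (T \<circ> (\<lambda>x. x /\<^sub>R norm x))"
    unfolding uniform_sphere_def by (subst distr_distr) auto
  also have "\<dots> = distr ?U borel ((\<lambda>x. x /\<^sub>R norm x) \<circ> T)" by (simp add: nrmT)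
  also have "\<dots> = distr (distr ?U borel T) borel (\<lambda>x. x /\<^sub>R norm x)"
    by (subst distr_distr) auto
  also have "\<dots> = uniform_sphere" unfolding uniform_sphere_def using \<open>distr ?U borel T = ?U\<close> by simp
  finally show ?thesis .
qed


definition refl_map :: "'a::euclidean_space \<Rightarrow> 'a \<Rightarrow> 'a" where
  "refl_map b x = x - (2 * (x \<bullet> b)) *\<^sub>R b"

lemma refl_inner: "b \<in> Basis \<Longrightarrow> i \<in> Basis \<Longrightarrow> refl_map b x \<bullet> i = (if i = b then - (x \<bullet> i) else x \<bullet> i)"
  by (auto simp: refl_map_def inner_diff_left inner_Basis)

lemma refl_linear: "linear (refl_map b)"
  by (rule linearI) (auto simp: refl_map_def algebra_simps inner_add_left)

lemma refl_norm: "b \<in> Basis \<Longrightarrow> norm (refl_map b x) = norm x"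
proof -
  assume b: "b \<in> Basis"
  have "norm (refl_map b x) ^ 2 = norm x ^ 2"
    unfolding refl_map_def power2_norm_eq_inner using b
    by (simp add: inner_diff_left inner_diff_right algebra_simps inner_commute)
  then show ?thesis by (simp add: power2_eq_iff_nonneg)
qed

lemma refl_lborel:
  assumes b: "b \<in> (Basis :: 'a::euclidean_space set)"
  shows "distr lborel borel (refl_map b) = (lborel :: 'a measure)"
proof -
  define c where "c j = (if j = b then -1 else (1::real))" for j :: 'a
  have c: "\<And>j. j \<in> Basis \<Longrightarrow> c j \<noteq> 0" by (simp add: c_def)
  have T: "(\<lambda>x. 0 + (\<Sum>j\<in>Basis. (c j * (x \<bullet> j)) *\<^sub>R j)) = refl_map b"
  proof
    fix x :: 'a
    show "0 + (\<Sum>j\<in>Basis. (c j * (x \<bullet> j)) *\<^sub>R j) = refl_map b x"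
      by (rule euclidean_eqI) (simp add: inner_sum_left inner_Basis if_distrib c_def refl_inner[OF b] cong: if_cong)
  qed
  have P: "(\<Prod>j\<in>Basis. \<bar>c j\<bar>) = 1" by (intro prod.neutral) (simp add: c_def)
  show ?thesis
    using lborel_affine_euclidean[of c 0, OF c] unfolding T P by (simp add: density_1)
qed

definition swap_map :: "'a::euclidean_space \<Rightarrow> 'a \<Rightarrow> 'a \<Rightarrow> 'a" where
  "swap_map b b' x = x + ((x \<bullet> b') - (x \<bullet> b)) *\<^sub>R b + ((x \<bullet> b) - (x \<bullet> b')) *\<^sub>R b'"

definition swp :: "'a \<Rightarrow> 'a \<Rightarrow> 'a \<Rightarrow> 'a" where
  "swp b b' i = (if i = b then b' else if i = b' then b else i)"

lemma swap_inner: "b \<in> Basis \<Longrightarrow> b' \<in> Basis \<Longrightarrow> b \<noteq> b' \<Longrightarrow> i \<in> Basis \<Longrightarrow>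
   swap_map b b' x \<bullet> i = x \<bullet> swp b b' i"
  by (auto simp: swap_map_def swp_def inner_add_left inner_Basis)

lemma swap_linear: "linear (swap_map b b')"
  by (rule linearI) (auto simp: swap_map_def algebra_simps inner_add_left)

lemma swp_bij: "b \<in> Basis \<Longrightarrow> b' \<in> Basis \<Longrightarrow> bij_betw (swp b b') Basis Basis"
  by (rule bij_betwI[where g="swp b b'"]) (auto simp: swp_def)

lemma norm_sq_sum: "norm (y::'a::euclidean_space) ^ 2 = (\<Sum>i\<in>Basis. (y \<bullet> i)^2)"
proof -
  have "y \<bullet> y = (\<Sum>i\<in>Basis. (y \<bullet> i) * (y \<bullet> i))" by (rule euclidean_inner)
  moreover have "norm y ^ 2 = y \<bullet> y" by (rule power2_norm_eq_inner)
  ultimately show ?thesis by (simp add: power2_eq_square)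
qed

lemma swap_norm:
  assumes "b \<in> Basis" "b' \<in> Basis" "b \<noteq> b'"
  shows "norm (swap_map b b' x) = norm x"
proof -
  have "norm (swap_map b b' x) ^ 2 = (\<Sum>i\<in>Basis. (swap_map b b' x \<bullet> i)^2)"
    by (rule norm_sq_sum)
  also have "\<dots> = (\<Sum>i\<in>Basis. (x \<bullet> swp b b' i)^2)"
    using assms by (intro sum.cong) (auto simp: swap_inner)
  also have "\<dots> = (\<Sum>i\<in>Basis. (x \<bullet> i)^2)"
    using sum.reindex_bij_betw[OF swp_bij[OF assms(1,2)], of "\<lambda>i. (x \<bullet> i)^2"] by simp
  also have "\<dots> = norm x ^ 2"
    by (rule norm_sq_sum[symmetric])
  finally show ?thesis using power2_eq_iff_nonneg norm_ge_zero by blast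
qed

lemma swap_lborel:
  assumes b: "b \<in> (Basis :: 'a::euclidean_space set)" "b' \<in> Basis" "b \<noteq> b'"
  shows "distr lborel borel (swap_map b b') = (lborel :: 'a measure)"
proof -
  have Tm[measurable]: "swap_map b b' \<in> borel_measurable borel"
    using swap_linear by (intro borel_measurable_continuous_onI linear_continuous_on linear_conv_bounded_linear[THEN iffD1])
  have si: "\<And>i. i \<in> Basis \<Longrightarrow> swp b b' i \<in> Basis" using b by (auto simp: swp_def)
  have ss: "\<And>i. swp b b' (swp b b' i) = i" by (auto simp: swp_def)
  show ?thesis
  proof (rule lborel_eqI[symmetric])
    fix l u :: 'a assume le: "\<And>i. i \<in> Basis \<Longrightarrow> l \<bullet> i \<le> u \<bullet> i"
    have pre: "swap_map b b' -` box l u = box (swap_map b b' l) (swap_map b b' u)"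
    proof (rule set_eqI)
      fix x
      have "x \<in> swap_map b b' -` box l u \<longleftrightarrow> (\<forall>i\<in>Basis. l \<bullet> i < x \<bullet> swp b b' i \<and> x \<bullet> swp b b' i < u \<bullet> i)"
        unfolding vimage_eq mem_box by (intro ball_cong refl) (simp add: swap_inner b)
      also have "\<dots> \<longleftrightarrow> (\<forall>j\<in>Basis. l \<bullet> swp b b' j < x \<bullet> j \<and> x \<bullet> j < u \<bullet> swp b b' j)"
      proof
        assume H: "\<forall>i\<in>Basis. l \<bullet> i < x \<bullet> swp b b' i \<and> x \<bullet> swp b b' i < u \<bullet> i"
        show "\<forall>j\<in>Basis. l \<bullet> swp b b' j < x \<bullet> j \<and> x \<bullet> j < u \<bullet> swp b b' j"
        proof
          fix j :: 'a assume j: "j \<in> Basis"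
          from H si[OF j] have "l \<bullet> swp b b' j < x \<bullet> swp b b' (swp b b' j) \<and> x \<bullet> swp b b' (swp b b' j) < u \<bullet> swp b b' j" by blast
          then show "l \<bullet> swp b b' j < x \<bullet> j \<and> x \<bullet> j < u \<bullet> swp b b' j" by (simp add: ss)
        qed
      next
        assume H: "\<forall>j\<in>Basis. l \<bullet> swp b b' j < x \<bullet> j \<and> x \<bullet> j < u \<bullet> swp b b' j"
        show "\<forall>i\<in>Basis. l \<bullet> i < x \<bullet> swp b b' i \<and> x \<bullet> swp b b' i < u \<bullet> i"
        proof
          fix j :: 'a assume j: "j \<in> Basis"
          from H si[OF j] have "l \<bullet> swp b b' (swp b b' j) < x \<bullet> swp b b' j \<and> x \<bullet> swp b b' j < u \<bullet> swp b b' (swp b b' j)" by blast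
          then show "l \<bullet> j < x \<bullet> swp b b' j \<and> x \<bullet> swp b b' j < u \<bullet> j" by (simp add: ss)
        qed
      qed
      also have "\<dots> \<longleftrightarrow> x \<in> box (swap_map b b' l) (swap_map b b' u)"
        unfolding mem_box by (intro ball_cong refl) (simp add: swap_inner b)
      finally show "x \<in> swap_map b b' -` box l u \<longleftrightarrow> x \<in> box (swap_map b b' l) (swap_map b b' u)" .
    qed
    have "emeasure (distr lborel borel (swap_map b b')) (box l u) = emeasure lborel (box (swap_map b b' l) (swap_map b b' u))"
      by (subst emeasure_distr) (auto simp: pre)
    also have "\<dots> = (\<Prod>i\<in>Basis. (u \<bullet> swp b b' i - l \<bullet> swp b b' i))"
    proof -
      have le': "\<And>i. i \<in> Basis \<Longrightarrow> swap_map b b' l \<bullet> i \<le> swap_map b b' u \<bullet> i"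
        using b le si by (simp add: swap_inner)
      have "emeasure lborel (box (swap_map b b' l) (swap_map b b' u)) = (\<Prod>i\<in>Basis. (swap_map b b' u - swap_map b b' l) \<bullet> i)"
        by (rule emeasure_lborel_box) (rule le')
      also have "(\<Prod>i\<in>Basis. (swap_map b b' u - swap_map b b' l) \<bullet> i) = (\<Prod>i\<in>Basis. (u \<bullet> swp b b' i - l \<bullet> swp b b' i))"
        using b by (intro prod.cong refl) (simp add: inner_diff_left swap_inner)
      finally show ?thesis by simp
    qed
    also have "\<dots> = (\<Prod>i\<in>Basis. (u \<bullet> i - l \<bullet> i))"
      using prod.reindex_bij_betw[OF swp_bij[OF b(1,2)], of "\<lambda>i. u \<bullet> i - l \<bullet> i"] by simp
    also have "(\<Prod>i\<in>Basis. (u \<bullet> i - l \<bullet> i)) = (\<Prod>i\<in>Basis. (u - l) \<bullet> i)"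
      by (intro prod.cong refl) (simp add: inner_diff_left)
    finally show "emeasure (distr lborel borel (swap_map b b')) (box l u) = (\<Prod>i\<in>Basis. (u - l) \<bullet> i)" .
  next
    show "sets (distr lborel borel (swap_map b b')) = sets borel" by simp
  qed
qed


lemma lin_meas: "linear (T::'a::euclidean_space \<Rightarrow> 'a) \<Longrightarrow> T \<in> borel_measurable borel"
  by (intro borel_measurable_continuous_onI linear_continuous_on linear_conv_bounded_linear[THEN iffD1])

lemma sphere_integral_invariant:
  fixes T :: "'a::euclidean_space \<Rightarrow> 'a" and h :: "'a \<Rightarrow> real"
  assumes lin: "linear T" and nT: "\<And>x. norm (T x) = norm x"
    and pres: "distr lborel borel T = lborel" and h: "h \<in> borel_measurable borel"
  shows "(\<integral>u. h (T u) \<partial>uniform_sphere) = (\<integral>u. h u \<partial>uniform_sphere)"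
proof -
  have Tm: "T \<in> measurable uniform_sphere borel" using lin_meas[OF lin] by simp
  have "(\<integral>u. h (T u) \<partial>uniform_sphere) = (\<integral>u. h u \<partial>distr uniform_sphere borel T)"
    by (rule integral_distr[OF Tm h, symmetric])
  also have "\<dots> = (\<integral>u. h u \<partial>uniform_sphere)" by (simp add: sphere_invariant[OF lin nT pres])
  finally show ?thesis .
qed

lemma integrable_sphere_bounded:
  fixes h :: "'a::euclidean_space \<Rightarrow> real"
  assumes h: "h \<in> borel_measurable borel" and B: "\<And>u. norm u = 1 \<Longrightarrow> \<bar>h u\<bar> \<le> B"
  shows "integrable uniform_sphere h"
proof -
  interpret prob_space "uniform_sphere :: 'a measure" by (rule prob_sphere)
  show ?thesis
    by (rule integrable_const_bound[where B=B]) (use AE_sphere B h in \<open>auto elim!: AE_mp\<close>)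
qed

lemma int_ij: "integrable uniform_sphere (\<lambda>u::'a::euclidean_space. (u \<bullet> i) * (u \<bullet> j))" if "i \<in> Basis" "j \<in> Basis"
proof (rule integrable_sphere_bounded[where B=1])
  fix u :: 'a assume u: "norm u = 1"
  have "\<bar>u \<bullet> i\<bar> \<le> 1" using Basis_le_norm[OF that(1), of u] u by simp
  moreover have "\<bar>u \<bullet> j\<bar> \<le> 1" using Basis_le_norm[OF that(2), of u] u by simp
  ultimately show "\<bar>(u \<bullet> i) * (u \<bullet> j)\<bar> \<le> 1" by (simp add: abs_mult mult_le_one)
qed simp

lemma int_i: "integrable uniform_sphere (\<lambda>u::'a::euclidean_space. (u \<bullet> i))" if "i \<in> Basis"
proof (rule integrable_sphere_bounded[where B=1])
  fix u :: 'a assume u: "norm u = 1"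
  show "\<bar>u \<bullet> i\<bar> \<le> 1" using Basis_le_norm[OF that(1), of u] u by simp
qed simp

lemma mom1: "b \<in> Basis \<Longrightarrow> (\<integral>u. (u \<bullet> b) \<partial>(uniform_sphere :: 'a::euclidean_space measure)) = 0"
proof -
  assume b: "b \<in> Basis"
  have "(\<integral>u. (refl_map b u \<bullet> b) \<partial>(uniform_sphere :: 'a measure)) = (\<integral>u. (u \<bullet> b) \<partial>uniform_sphere)"
    by (rule sphere_integral_invariant[OF refl_linear refl_norm[OF b] refl_lborel[OF b]]) simp
  moreover have "(\<integral>u. (refl_map b u \<bullet> b) \<partial>(uniform_sphere :: 'a measure)) = - (\<integral>u. (u \<bullet> b) \<partial>uniform_sphere)"
    using b by (simp add: refl_inner)
  ultimately show ?thesis by simp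
qed

lemma mom2: "b \<in> Basis \<Longrightarrow> b' \<in> Basis \<Longrightarrow> b \<noteq> b' \<Longrightarrow>
   (\<integral>u. (u \<bullet> b) * (u \<bullet> b') \<partial>(uniform_sphere :: 'a::euclidean_space measure)) = 0"
proof -
  assume b: "b \<in> Basis" "b' \<in> Basis" "b \<noteq> b'"
  have "(\<integral>u. (refl_map b u \<bullet> b) * (refl_map b u \<bullet> b') \<partial>(uniform_sphere :: 'a measure)) = (\<integral>u. (u \<bullet> b) * (u \<bullet> b') \<partial>uniform_sphere)"
    by (rule sphere_integral_invariant[OF refl_linear refl_norm[OF b(1)] refl_lborel[OF b(1)]]) simp
  moreover have "(\<integral>u. (refl_map b u \<bullet> b) * (refl_map b u \<bullet> b') \<partial>(uniform_sphere :: 'a measure)) = - (\<integral>u. (u \<bullet> b) * (u \<bullet> b') \<partial>uniform_sphere)"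
    using b by (simp add: refl_inner)
  ultimately show ?thesis by simp
qed

lemma mom3:
  fixes b b' :: "'a::euclidean_space"
  assumes b: "b \<in> Basis" "b' \<in> Basis"
  shows "(\<integral>u. (u \<bullet> b) * (u \<bullet> b) \<partial>(uniform_sphere :: 'a measure)) = (\<integral>u. (u \<bullet> b') * (u \<bullet> b') \<partial>uniform_sphere)"
proof (cases "b = b'")
  case False
  have "(\<integral>u. (swap_map b b' u \<bullet> b) * (swap_map b b' u \<bullet> b) \<partial>(uniform_sphere :: 'a measure)) = (\<integral>u. (u \<bullet> b) * (u \<bullet> b) \<partial>uniform_sphere)"
    by (rule sphere_integral_invariant[OF swap_linear swap_norm[OF b False] swap_lborel[OF b False]]) simp
  moreover have "\<And>u. swap_map b b' u \<bullet> b = u \<bullet> b'" using b False by (simp add: swap_inner swp_def)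
  ultimately show ?thesis by simp
qed simp

lemma mom4: "(\<Sum>b\<in>Basis. (\<integral>u. (u \<bullet> b) * (u \<bullet> b) \<partial>(uniform_sphere :: 'a::euclidean_space measure))) = 1"
proof -
  have "(\<Sum>b\<in>Basis. (\<integral>u. (u \<bullet> b) * (u \<bullet> b) \<partial>(uniform_sphere :: 'a measure))) = (\<integral>u. (\<Sum>b\<in>Basis. (u \<bullet> b) * (u \<bullet> b)) \<partial>(uniform_sphere :: 'a measure))"
    by (subst Bochner_Integration.integral_sum) (auto simp: int_ij)
  also have "\<dots> = (\<integral>u. 1 \<partial>(uniform_sphere :: 'a measure))"
  proof (rule integral_cong_AE)
    show "AE u in uniform_sphere. (\<Sum>b\<in>Basis. (u \<bullet> b) * (u \<bullet> b)) = (1::real)"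
      using AE_sphere
    proof eventually_elim
      case (elim u)
      have "u \<bullet> u = (\<Sum>b\<in>Basis. (u \<bullet> b) * (u \<bullet> b))" by (rule euclidean_inner)
      moreover have "u \<bullet> u = 1" using elim by (simp add: dot_square_norm)
      ultimately show ?case by simp
    qed
  qed simp_all
  also have "\<dots> = 1" using prob_space.prob_space[OF prob_sphere[where 'a='a]] by simp
  finally show ?thesis .
qed

lemma mom_sq:
  fixes b :: "'a::euclidean_space"
  assumes b: "b \<in> Basis"
  shows "(\<integral>u. (u \<bullet> b) * (u \<bullet> b) \<partial>(uniform_sphere :: 'a measure)) = 1 / real DIM('a)"
proof -
  have "(\<Sum>b'\<in>Basis. (\<integral>u. (u \<bullet> b') * (u \<bullet> b') \<partial>(uniform_sphere :: 'a measure))) = real DIM('a) * (\<integral>u. (u \<bullet> b) * (u \<bullet> b) \<partial>uniform_sphere)"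
  proof -
    have "(\<Sum>b'\<in>Basis. (\<integral>u. (u \<bullet> b') * (u \<bullet> b') \<partial>(uniform_sphere :: 'a measure))) = (\<Sum>b'\<in>(Basis :: 'a set). (\<integral>u. (u \<bullet> b) * (u \<bullet> b) \<partial>(uniform_sphere :: 'a measure)))"
      using mom3[OF _ b] by (intro sum.cong refl) blast
    then show ?thesis by simp
  qed
  with mom4[where 'a='a] show ?thesis by (simp add: field_simps)
qed

lemma sphere_mean: "(\<integral>u. (v \<bullet> u) \<partial>(uniform_sphere :: 'a::euclidean_space measure)) = 0"
proof -
  have "(\<integral>u. (v \<bullet> u) \<partial>(uniform_sphere :: 'a measure)) = (\<integral>u. (\<Sum>b\<in>Basis. (v \<bullet> b) * (u \<bullet> b)) \<partial>uniform_sphere)"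
    by (rule Bochner_Integration.integral_cong[OF refl]) (rule euclidean_inner)
  also have "\<dots> = (\<Sum>b\<in>Basis. (\<integral>u. (v \<bullet> b) * (u \<bullet> b) \<partial>uniform_sphere))"
    by (rule Bochner_Integration.integral_sum) (simp add: int_i)
  also have "\<dots> = 0" by (simp add: mom1)
  finally show ?thesis .
qed

lemma sphere_sq: "(\<integral>u. (v \<bullet> u)^2 \<partial>(uniform_sphere :: 'a::euclidean_space measure)) = norm v ^ 2 / real DIM('a)"
proof -
  have "(\<integral>u. (v \<bullet> u)^2 \<partial>(uniform_sphere :: 'a measure)) =
     (\<integral>u. (\<Sum>b\<in>Basis. \<Sum>b'\<in>Basis. ((v \<bullet> b) * (v \<bullet> b')) * ((u \<bullet> b) * (u \<bullet> b'))) \<partial>uniform_sphere)"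
  proof (rule Bochner_Integration.integral_cong[OF refl])
    fix u :: 'a
    have "v \<bullet> u = (\<Sum>b\<in>Basis. (v \<bullet> b) * (u \<bullet> b))" by (rule euclidean_inner)
    then show "(v \<bullet> u)^2 = (\<Sum>b\<in>Basis. \<Sum>b'\<in>Basis. ((v \<bullet> b) * (v \<bullet> b')) * ((u \<bullet> b) * (u \<bullet> b')))"
      by (simp add: power2_eq_square sum_product algebra_simps)
  qed
  also have "\<dots> = (\<Sum>b\<in>Basis. \<Sum>b'\<in>Basis. ((v \<bullet> b) * (v \<bullet> b')) * (\<integral>u. (u \<bullet> b) * (u \<bullet> b') \<partial>uniform_sphere))"
  proof -
    have int2: "\<And>b b'. b \<in> Basis \<Longrightarrow> b' \<in> Basis \<Longrightarrow> integrable (uniform_sphere :: 'a measure) (\<lambda>u. ((v \<bullet> b) * (v \<bullet> b')) * ((u \<bullet> b) * (u \<bullet> b')))"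
      by (intro integrable_mult_right int_ij)
    have "(\<integral>u. (\<Sum>b\<in>Basis. \<Sum>b'\<in>Basis. ((v \<bullet> b) * (v \<bullet> b')) * ((u \<bullet> b) * (u \<bullet> b'))) \<partial>(uniform_sphere :: 'a measure))
      = (\<Sum>b\<in>Basis. (\<integral>u. (\<Sum>b'\<in>Basis. ((v \<bullet> b) * (v \<bullet> b')) * ((u \<bullet> b) * (u \<bullet> b'))) \<partial>uniform_sphere))"
      by (rule Bochner_Integration.integral_sum) (intro Bochner_Integration.integrable_sum int2)
    also have "\<dots> = (\<Sum>b\<in>Basis. \<Sum>b'\<in>Basis. (\<integral>u. ((v \<bullet> b) * (v \<bullet> b')) * ((u \<bullet> b) * (u \<bullet> b')) \<partial>uniform_sphere))"
      by (intro sum.cong refl Bochner_Integration.integral_sum int2)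
    finally show ?thesis by simp
  qed
  also have "\<dots> = (\<Sum>b\<in>Basis. (v \<bullet> b) * (v \<bullet> b) * (1 / real DIM('a)))"
  proof (rule sum.cong[OF refl])
    fix b :: 'a assume b: "b \<in> Basis"
    have "(\<Sum>b'\<in>Basis. ((v \<bullet> b) * (v \<bullet> b')) * (\<integral>u. (u \<bullet> b) * (u \<bullet> b') \<partial>(uniform_sphere :: 'a measure)))
        = (\<Sum>b'\<in>Basis. if b' = b then (v \<bullet> b) * (v \<bullet> b) * (1 / real DIM('a)) else 0)"
      using b by (intro sum.cong refl) (auto simp: mom2 mom_sq)
    also have "\<dots> = (v \<bullet> b) * (v \<bullet> b) * (1 / real DIM('a))" using b by simp
    finally show "(\<Sum>b'\<in>Basis. ((v \<bullet> b) * (v \<bullet> b')) * (\<integral>u. (u \<bullet> b) * (u \<bullet> b') \<partial>(uniform_sphere :: 'a measure))) = (v \<bullet> b) * (v \<bullet> b) * (1 / real DIM('a))" .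
  qed
  also have "\<dots> = (\<Sum>b\<in>Basis. (v \<bullet> b) * (v \<bullet> b)) / real DIM('a)"
    by (simp add: sum_divide_distrib)
  also have "(\<Sum>b\<in>Basis. (v \<bullet> b) * (v \<bullet> b)) = norm v ^ 2"
    using euclidean_inner[of v v] by (simp add: power2_norm_eq_inner)
  finally show ?thesis .
qed


lemma sq_conv: fixes A c x y :: real
  assumes "0 \<le> A" "0 < c" "A + c = 1" "0 \<le> x" "0 \<le> y"
  shows "(A * x + y)^2 \<le> A * x^2 + y^2 / c"
proof -
  have Ae: "A = 1 - c" using assms by simp
  have "c * (A * x^2 + y^2 / c) - c * (A * x + y)^2 = A * (c * x - y)^2"
    using assms(2) unfolding Ae by (simp add: field_simps power2_eq_square)
  moreover have "A * (c * x - y)^2 \<ge> 0" using assms by simp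
  ultimately have "c * (A * x + y)^2 \<le> c * (A * x^2 + y^2 / c)" by (simp add: algebra_simps)
  then show ?thesis using assms(2) by simp
qed

lemma aux_lin: fixes s A c y :: real
  assumes "s \<le> A * s + y" "A + c = 1" "0 < c"
  shows "s \<le> y / c / c * c"
proof -
  have "c = 1 - A" using assms by simp
  then have "c * s = s - A * s" by (simp add: left_diff_distrib)
  then have "c * s \<le> y" using assms(1) by linarith
  then show ?thesis using assms(3) by (simp add: field_simps)
qed

lemma seq_B:
  fixes a :: real and Bs D :: "nat \<Rightarrow> real"
  assumes a: "\<bar>a\<bar> < 1" and B1: "Bs 1 = 0"
    and Bs: "\<And>k. k \<ge> 1 \<Longrightarrow> Bs (Suc k) = a * Bs k + D (Suc k)"
  shows "(\<Sum>k=1..T. (Bs k)^2) \<le> (\<Sum>k=2..T. (D k)^2) / (1 - \<bar>a\<bar>)^2"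
proof -
  define A where "A = \<bar>a\<bar>"
  define c where "c = 1 - A"
  have A: "0 \<le> A" "A < 1" using a by (auto simp: A_def)
  have c: "0 < c" "A + c = 1" using A by (auto simp: c_def)
  have step: "(Bs (Suc k))^2 \<le> A * (Bs k)^2 + (D (Suc k))^2 / c" if "k \<ge> 1" for k
  proof -
    have "(Bs (Suc k))^2 = \<bar>a * Bs k + D (Suc k)\<bar>^2" using Bs[OF that] by simp
    also have "\<dots> \<le> (A * \<bar>Bs k\<bar> + \<bar>D (Suc k)\<bar>)^2"
      by (rule power_mono) (auto simp: A_def abs_mult intro: abs_triangle_ineq[THEN order_trans])
    also have "\<dots> \<le> A * \<bar>Bs k\<bar>^2 + \<bar>D (Suc k)\<bar>^2 / c"
      by (rule sq_conv) (use A c in auto)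
    finally show ?thesis by simp
  qed
  have claim: "(\<Sum>k=1..Suc n. (Bs k)^2) \<le> A * (\<Sum>k=1..n. (Bs k)^2) + (\<Sum>k=2..Suc n. (D k)^2) / c" for n
  proof (induction n)
    case 0 then show ?case using B1 by simp
  next
    case (Suc n)
    have "(\<Sum>k=1..Suc (Suc n). (Bs k)^2) = (\<Sum>k=1..Suc n. (Bs k)^2) + (Bs (Suc (Suc n)))^2" by simp
    also have "\<dots> \<le> A * (\<Sum>k=1..n. (Bs k)^2) + (\<Sum>k=2..Suc n. (D k)^2) / c + (A * (Bs (Suc n))^2 + (D (Suc (Suc n)))^2 / c)"
      using Suc.IH step[of "Suc n"] by simp
    also have "\<dots> = A * (\<Sum>k=1..Suc n. (Bs k)^2) + (\<Sum>k=2..Suc (Suc n). (D k)^2) / c"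
      by (simp add: algebra_simps add_divide_distrib)
    finally show ?case .
  qed
  show ?thesis
  proof (cases T)
    case 0 then show ?thesis by simp
  next
    case (Suc n)
    have nn: "0 \<le> (Bs (Suc n))^2" by simp
    have "(\<Sum>k=1..n. (Bs k)^2) \<le> (\<Sum>k=1..Suc n. (Bs k)^2)" using nn by simp
    then have "A * (\<Sum>k=1..n. (Bs k)^2) \<le> A * (\<Sum>k=1..Suc n. (Bs k)^2)"
      using A by (intro mult_left_mono) auto
    then have "(\<Sum>k=1..Suc n. (Bs k)^2) \<le> A * (\<Sum>k=1..Suc n. (Bs k)^2) + (\<Sum>k=2..Suc n. (D k)^2) / c"
      using claim[of n] by linarith
    then have "(\<Sum>k=1..Suc n. (Bs k)^2) \<le> (\<Sum>k=2..Suc n. (D k)^2) / c / c / c * c"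
      using c by (intro aux_lin) auto
    then have "(\<Sum>k=1..Suc n. (Bs k)^2) \<le> (\<Sum>k=2..Suc n. (D k)^2) / c / c"
      using c by simp
    then show ?thesis using Suc by (simp add: c_def A_def power2_eq_square)
  qed
qed

lemma seq_S:
  fixes a b :: real and sg mu :: "nat \<Rightarrow> real"
  assumes a: "a^2 < 1" and s0: "sg 0 = 0" and sT: "\<And>k. sg k \<ge> 0"
    and sg: "\<And>k. sg (Suc k) = a^2 * sg k + mu (Suc k)"
  shows "(\<Sum>k=1..T. (mu k + b^2 * sg (k - 1))) \<le> (1 + b^2 / (1 - a^2)) * (\<Sum>k=1..T. mu k)"
proof -
  define Q where "Q = (\<Sum>k=1..T. sg (k - 1))"
  have eq: "(\<Sum>k=1..T. sg k) = a^2 * Q + (\<Sum>k=1..T. mu k)"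
  proof -
    have "(\<Sum>k=1..T. sg k) = (\<Sum>k=1..T. a^2 * sg (k - 1) + mu k)"
    proof (intro sum.cong refl)
      fix k assume "k \<in> {1..T}"
      then obtain j where j: "k = Suc j" by (cases k) auto
      show "sg k = a^2 * sg (k - 1) + mu k" using sg[of j] j by simp
    qed
    then show ?thesis by (simp add: Q_def sum.distrib sum_distrib_left)
  qed
  have le: "Q \<le> (\<Sum>k=1..T. sg k)"
  proof (cases T)
    case (Suc n)
    have "Q = (\<Sum>k=0..n. sg k)" unfolding Q_def Suc
      using sum.atLeast_Suc_atMost_Suc_shift[of "\<lambda>k. sg (k - 1)" 0 n] by simp
    also have "\<dots> = (\<Sum>k=1..n. sg k)" using s0 by (simp add: sum.atLeast_Suc_atMost)
    also have "\<dots> \<le> (\<Sum>k=1..Suc n. sg k)" using sT[of "Suc n"] by simp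
    finally show ?thesis using Suc by simp
  qed (simp add: Q_def)
  have "(1 - a^2) * Q \<le> (\<Sum>k=1..T. mu k)" using eq le by (simp add: algebra_simps)
  then have Q: "Q \<le> (\<Sum>k=1..T. mu k) / (1 - a^2)" using a by (simp add: field_simps)
  have "(\<Sum>k=1..T. (mu k + b^2 * sg (k - 1))) = (\<Sum>k=1..T. mu k) + b^2 * Q"
    by (simp add: Q_def sum.distrib sum_distrib_left)
  also have "\<dots> \<le> (\<Sum>k=1..T. mu k) + b^2 * ((\<Sum>k=1..T. mu k) / (1 - a^2))"
    using Q by (intro add_left_mono mult_left_mono) auto
  also have "\<dots> = (1 + b^2 / (1 - a^2)) * (\<Sum>k=1..T. mu k)" by (simp add: algebra_simps)
  finally show ?thesis .
qed


lemma sq_split: fixes M N :: real shows "(M + N)^2 \<le> 25/16 * M^2 + 25/9 * N^2"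
proof -
  have "25/16 * M^2 + 25/9 * N^2 - (M + N)^2 = (3/4 * M - 4/3 * N)^2"
    by (simp add: power2_eq_square algebra_simps)
  moreover have "(3/4 * M - 4/3 * N)^2 \<ge> 0" by simp
  ultimately show ?thesis by linarith
qed

lemma sq2: fixes x y :: real shows "(x + y)^2 \<le> 2 * x^2 + 2 * y^2"
proof -
  have "2 * x^2 + 2 * y^2 - (x + y)^2 = (x - y)^2" by (simp add: power2_eq_square algebra_simps)
  moreover have "(x - y)^2 \<ge> 0" by simp
  ultimately show ?thesis by linarith
qed

lemma seq_Z:
  fixes a \<beta> \<rho> y1 :: real and z m R D S Mk :: "nat \<Rightarrow> real"
  assumes \<beta>: "0 < \<beta>" "\<beta> < 2" and a: "a = 1 - \<beta>" and \<rho>: "0 \<le> \<rho>"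
    and z1: "z 1 = m 1 + R 1 + y1" and y1: "\<bar>y1\<bar> \<le> \<rho>"
    and zs: "\<And>k. k \<ge> 1 \<Longrightarrow> z (Suc k) = a * z k + (m (Suc k) + R (Suc k)) - (m k + R k) + D (Suc k)"
    and R: "\<And>k. k \<ge> 1 \<Longrightarrow> \<bar>R k\<bar> \<le> \<rho>"
    and S0: "S 0 = 0" and Ss: "\<And>k. S (Suc k) = a * S k + m (Suc k)"
    and Mk: "\<And>k. Mk k = m k - \<beta> * S (k - 1)"
  shows "(\<Sum>k=1..T. (z k)^2) \<le> 25/8 * (\<Sum>k=1..T. (Mk k)^2)
      + 50/9 * real T * (2 * \<rho> / (1 - \<bar>1 - \<beta>\<bar>))^2
      + 2 / (1 - \<bar>1 - \<beta>\<bar>)^2 * (\<Sum>k=2..T. (D k)^2)"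
proof -
  define bp where "bp = 1 - \<bar>1 - \<beta>\<bar>"
  have bp: "0 < bp" "bp \<le> 1" "\<beta> + bp \<le> 2" "1 - \<bar>a\<bar> = bp" using \<beta> a by (auto simp: bp_def)
  define c where "c = max 1 (\<beta> / bp)"
  have c1: "1 + c \<le> 2 / bp"
  proof (cases "1 \<le> \<beta> / bp")
    case True
    then have "c = \<beta> / bp" by (simp add: c_def)
    then have "1 + c = (bp + \<beta>) / bp" using bp by (simp add: field_simps)
    also have "\<dots> \<le> 2 / bp" using bp by (intro divide_right_mono) auto
    finally show ?thesis .
  next
    case False
    then have "c = 1" by (simp add: c_def)
    moreover have "1 \<le> 1 / bp" using bp by (simp add: field_simps)
    ultimately show ?thesis by simp
  qed
  have cge1: "1 \<le> c" by (simp add: c_def)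
  have "\<beta> / bp \<le> c" by (simp add: c_def)
  then have "bp * (\<beta> / bp) \<le> bp * c" using bp by (intro mult_left_mono) auto
  then have cge: "1 \<le> c" "\<beta> \<le> bp * c" using bp cge1 by auto
  define Y where "Y = rec_nat y1 (\<lambda>j y. a * y - \<beta> * R (Suc j))"
  have Y0: "Y 0 = y1" and YS: "\<And>j. Y (Suc j) = a * Y j - \<beta> * R (Suc j)" by (simp_all add: Y_def)
  define Bs where "Bs = rec_nat 0 (\<lambda>j y. a * y + D (Suc (Suc j)))"
  have B0: "Bs 0 = 0" and BS: "\<And>j. Bs (Suc j) = a * Bs j + D (Suc (Suc j))" by (simp_all add: Bs_def)
  have decomp: "z (Suc j) = Mk (Suc j) + (R (Suc j) + Y j) + Bs j" for j
  proof (induction j)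
    case 0 then show ?case using z1 S0 Mk[of 1] Y0 B0 by simp
  next
    case (Suc j)
    have "z (Suc (Suc j)) = a * z (Suc j) + (m (Suc (Suc j)) + R (Suc (Suc j))) - (m (Suc j) + R (Suc j)) + D (Suc (Suc j))"
      using zs[of "Suc j"] by simp
    also have "\<dots> = Mk (Suc (Suc j)) + (R (Suc (Suc j)) + Y (Suc j)) + Bs (Suc j)"
      unfolding Suc.IH YS BS by (simp add: Mk Ss a algebra_simps)
    finally show ?case .
  qed
  have Ybd: "\<bar>Y j\<bar> \<le> \<rho> * c" for j
  proof (induction j)
    case 0
    have "\<rho> * 1 \<le> \<rho> * c" using cge \<rho> by (intro mult_left_mono) auto
    then show ?case using y1 Y0 by simp
  next
    case (Suc j)
    have "\<bar>Y (Suc j)\<bar> \<le> \<bar>a\<bar> * \<bar>Y j\<bar> + \<beta> * \<bar>R (Suc j)\<bar>"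
      unfolding YS using \<beta> by (simp add: abs_mult abs_triangle_ineq4[THEN order_trans])
    also have "\<dots> \<le> \<bar>a\<bar> * (\<rho> * c) + \<beta> * \<rho>"
      using Suc.IH R[of "Suc j"] \<beta> by (intro add_mono mult_left_mono) auto
    also have "\<dots> \<le> \<bar>a\<bar> * (\<rho> * c) + bp * c * \<rho>"
      using cge \<rho> by (intro add_left_mono mult_right_mono) auto
    also have "\<dots> = \<rho> * c" using bp(4) by (simp add: algebra_simps flip: bp(4))
    finally show ?case .
  qed
  have Nbd: "(R (Suc j) + Y j)^2 \<le> (2 * \<rho> / bp)^2" for j
  proof -
    have "\<bar>R (Suc j) + Y j\<bar> \<le> \<rho> + \<rho> * c" using R[of "Suc j"] Ybd[of j] by (simp add: abs_triangle_ineq[THEN order_trans])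
    also have "\<dots> = \<rho> * (1 + c)" by (simp add: algebra_simps)
    also have "\<dots> \<le> \<rho> * (2 / bp)" using c1 \<rho> by (intro mult_left_mono) auto
    finally have "\<bar>R (Suc j) + Y j\<bar> \<le> 2 * \<rho> / bp" by (simp add: mult.commute)
    then show ?thesis by (metis abs_ge_zero order_trans power2_abs power_mono)
  qed
  have zbd: "(z k)^2 \<le> 25/8 * (Mk k)^2 + 50/9 * (2 * \<rho> / bp)^2 + 2 * (Bs (k - 1))^2" if k1: "k \<ge> 1" for k
  proof -
    obtain j where j: "k = Suc j" using k1 by (cases k) auto
    have "(z k)^2 = ((Mk k + (R k + Y j)) + Bs j)^2" using decomp[of j] j by simp
    also have "\<dots> \<le> 2 * (Mk k + (R k + Y j))^2 + 2 * (Bs j)^2"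
      by (rule sq2)
    also have "\<dots> \<le> 2 * (25/16 * (Mk k)^2 + 25/9 * (R k + Y j)^2) + 2 * (Bs j)^2"
      using sq_split[of "Mk k" "R k + Y j"] by simp
    also have "\<dots> \<le> 2 * (25/16 * (Mk k)^2 + 25/9 * (2 * \<rho> / bp)^2) + 2 * (Bs j)^2"
      using Nbd[of j] j by simp
    finally show ?thesis using j by simp
  qed
  have Bsum: "(\<Sum>k=1..T. (Bs (k - 1))^2) \<le> (\<Sum>k=2..T. (D k)^2) / (1 - \<bar>a\<bar>)^2"
  proof (rule seq_B)
    show "\<bar>a\<bar> < 1" using bp by linarith
    show "Bs (1 - 1) = 0" using B0 by simp
    fix k :: nat assume "k \<ge> 1"
    then obtain j where j: "k = Suc j" by (cases k) auto
    show "Bs (Suc k - 1) = a * Bs (k - 1) + D (Suc k)" using BS[of j] j by simp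
  qed
  have "(\<Sum>k=1..T. (z k)^2) \<le> (\<Sum>k=1..T. 25/8 * (Mk k)^2 + 50/9 * (2 * \<rho> / bp)^2 + 2 * (Bs (k - 1))^2)"
    by (intro sum_mono zbd) auto
  also have "\<dots> = 25/8 * (\<Sum>k=1..T. (Mk k)^2) + 50/9 * real T * (2 * \<rho> / bp)^2 + 2 * (\<Sum>k=1..T. (Bs (k - 1))^2)"
    by (simp add: sum.distrib sum_distrib_left)
  also have "\<dots> \<le> 25/8 * (\<Sum>k=1..T. (Mk k)^2) + 50/9 * real T * (2 * \<rho> / bp)^2 + 2 * ((\<Sum>k=2..T. (D k)^2) / bp^2)"
    using Bsum bp(4) by simp
  finally show ?thesis by (simp add: bp_def)
qed


lemma seq_P:
  fixes p g :: "nat \<Rightarrow> 'a::real_normed_vector" and \<alpha> \<eta> :: real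
  assumes \<alpha>: "0 \<le> \<alpha>" "\<alpha> < 1" and p0: "p 0 = 0"
    and ps: "\<And>k. p (Suc k) = \<alpha> *\<^sub>R p k + \<eta> *\<^sub>R g (Suc k)"
  shows "(\<Sum>k=1..T. (norm (p k))^2) \<le> 2 * \<eta>^2 * (1 + \<alpha>^2) / (1 - \<alpha>^2)^2 * (\<Sum>k=1..T. (norm (g k))^2)"
proof -
  define c where "c = 1 - \<alpha>"
  have c: "0 < c" "\<alpha> + c = 1" "c \<le> 1" using \<alpha> by (auto simp: c_def)
  define d where "d k = \<bar>\<eta>\<bar> * norm (g k)" for k
  have step: "(norm (p (Suc k)))^2 \<le> \<alpha> * (norm (p k))^2 + (d (Suc k))^2 / c" for k
  proof -
    have "norm (p (Suc k)) \<le> \<alpha> * norm (p k) + d (Suc k)"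
      unfolding ps d_def using \<alpha> by (simp add: norm_triangle_ineq[THEN order_trans])
    then have "(norm (p (Suc k)))^2 \<le> (\<alpha> * norm (p k) + d (Suc k))^2"
      by (rule power_mono) simp
    also have "\<dots> \<le> \<alpha> * (norm (p k))^2 + (d (Suc k))^2 / c"
      by (rule sq_conv) (use \<alpha> c in \<open>auto simp: d_def\<close>)
    finally show ?thesis .
  qed
  have claim: "(\<Sum>k=1..Suc n. (norm (p k))^2) \<le> \<alpha> * (\<Sum>k=1..n. (norm (p k))^2) + (\<Sum>k=1..Suc n. (d k)^2) / c" for n
  proof (induction n)
    case 0 then show ?case using step[of 0] p0 by simp
  next
    case (Suc n)
    have "(\<Sum>k=1..Suc (Suc n). (norm (p k))^2) = (\<Sum>k=1..Suc n. (norm (p k))^2) + (norm (p (Suc (Suc n))))^2" by simp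
    also have "\<dots> \<le> \<alpha> * (\<Sum>k=1..n. (norm (p k))^2) + (\<Sum>k=1..Suc n. (d k)^2) / c + (\<alpha> * (norm (p (Suc n)))^2 + (d (Suc (Suc n)))^2 / c)"
      using Suc.IH step[of "Suc n"] by simp
    also have "\<dots> = \<alpha> * (\<Sum>k=1..Suc n. (norm (p k))^2) + (\<Sum>k=1..Suc (Suc n). (d k)^2) / c"
      by (simp add: algebra_simps add_divide_distrib)
    finally show ?case .
  qed
  have main: "(\<Sum>k=1..T. (norm (p k))^2) \<le> (\<Sum>k=1..T. (d k)^2) / c / c"
  proof (cases T)
    case 0 then show ?thesis by simp
  next
    case (Suc n)
    have "(\<Sum>k=1..n. (norm (p k))^2) \<le> (\<Sum>k=1..Suc n. (norm (p k))^2)" by simp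
    then have "\<alpha> * (\<Sum>k=1..n. (norm (p k))^2) \<le> \<alpha> * (\<Sum>k=1..Suc n. (norm (p k))^2)"
      using \<alpha> by (intro mult_left_mono) auto
    then have "(\<Sum>k=1..Suc n. (norm (p k))^2) \<le> \<alpha> * (\<Sum>k=1..Suc n. (norm (p k))^2) + (\<Sum>k=1..Suc n. (d k)^2) / c"
      using claim[of n] by linarith
    then have "(\<Sum>k=1..Suc n. (norm (p k))^2) \<le> (\<Sum>k=1..Suc n. (d k)^2) / c / c / c * c"
      using c by (intro aux_lin) auto
    then show ?thesis using Suc c by simp
  qed
  have dsum: "(\<Sum>k=1..T. (d k)^2) = \<eta>^2 * (\<Sum>k=1..T. (norm (g k))^2)"
    by (simp add: d_def power_mult_distrib sum_distrib_left)
  have G0: "0 \<le> (\<Sum>k=1..T. (norm (g k))^2)" by (intro sum_nonneg) auto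
  have cst: "\<eta>^2 / c / c \<le> 2 * \<eta>^2 * (1 + \<alpha>^2) / (1 - \<alpha>^2)^2"
  proof -
    have e: "(1 - \<alpha>^2)^2 = c^2 * (1 + \<alpha>)^2" by (simp add: c_def power2_eq_square algebra_simps)
    have "(1 + \<alpha>)^2 \<le> 2 * (1 + \<alpha>^2)" using sq2[of 1 \<alpha>] by simp
    then have "\<eta>^2 * (1 + \<alpha>)^2 \<le> \<eta>^2 * (2 * (1 + \<alpha>^2))" by (intro mult_left_mono) auto
    then have "\<eta>^2 * (1 + \<alpha>)^2 / (c^2 * (1 + \<alpha>)^2) \<le> \<eta>^2 * (2 * (1 + \<alpha>^2)) / (c^2 * (1 + \<alpha>)^2)"
      using c \<alpha> by (intro divide_right_mono) auto
    moreover have "\<eta>^2 * (1 + \<alpha>)^2 / (c^2 * (1 + \<alpha>)^2) = \<eta>^2 / c / c"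
    proof -
      have pos: "(1 + \<alpha>)^2 \<noteq> 0" using \<alpha> by simp
      have "\<eta>^2 * (1 + \<alpha>)^2 / (c^2 * (1 + \<alpha>)^2) = \<eta>^2 / c^2"
        by (rule nonzero_mult_divide_mult_cancel_right[OF pos])
      then show ?thesis by (simp add: power2_eq_square)
    qed
    ultimately have "\<eta>^2 / c / c \<le> \<eta>^2 * (2 * (1 + \<alpha>^2)) / (c^2 * (1 + \<alpha>)^2)" by simp
    moreover have "\<eta>^2 * (2 * (1 + \<alpha>^2)) = 2 * \<eta>^2 * (1 + \<alpha>^2)" by simp
    ultimately show ?thesis unfolding e by metis
  qed
  have "(\<Sum>k=1..T. (norm (p k))^2) \<le> \<eta>^2 / c / c * (\<Sum>k=1..T. (norm (g k))^2)"
    using main dsum by simp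
  also have "\<dots> \<le> 2 * \<eta>^2 * (1 + \<alpha>^2) / (1 - \<alpha>^2)^2 * (\<Sum>k=1..T. (norm (g k))^2)"
    using cst G0 by (intro mult_right_mono) auto
  finally show ?thesis .
qed


locale hlfl =
  fixes f :: "'a::euclidean_space \<Rightarrow> real" and grad :: "'a \<Rightarrow> 'a"
    and G L \<alpha> \<beta> \<eta> r :: real and x1 :: 'a
  assumes lip: "\<And>x y. \<bar>f x - f y\<bar> \<le> G * norm (x - y)"
    and deriv: "\<And>x. (f has_derivative (\<lambda>h. grad x \<bullet> h)) (at x)"
    and smooth: "\<And>x y. norm (grad x - grad y) \<le> L * norm (x - y)"
    and \<alpha>: "0 \<le> \<alpha>" "\<alpha> < 1" and \<beta>: "0 < \<beta>" "\<beta> < 2" and \<eta>: "\<eta> > 0" and r: "r > 0"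
begin

definition "X u k = hlf_x f \<alpha> \<beta> \<eta> r x1 u k"
definition "Z u k = hlf_z f \<alpha> \<beta> \<eta> r x1 u k"
definition "P u k = hlf_p f \<alpha> \<beta> \<eta> r x1 u k"
definition "Gk u k = hlf_g f \<alpha> \<beta> \<eta> r x1 u k"

lemma some_basis: "(SOME b. b \<in> (Basis :: 'a set)) \<in> Basis"
  by (rule someI_ex) (use nonempty_Basis in blast)

lemma G_nonneg: "0 \<le> G"
proof -
  define b :: 'a where "b = (SOME b. b \<in> Basis)"
  have "norm b = 1" using some_basis by (simp add: b_def)
  moreover have "\<bar>f 0 - f b\<bar> \<le> G * norm (0 - b)" by (rule lip)
  ultimately show ?thesis by simp
qed

lemma L_nonneg: "0 \<le> L"
proof -
  define b :: 'a where "b = (SOME b. b \<in> Basis)"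
  have "norm b = 1" using some_basis by (simp add: b_def)
  moreover have "norm (grad 0 - grad b) \<le> L * norm (0 - b)" by (rule smooth)
  ultimately show ?thesis by simp (metis norm_ge_zero order_trans)
qed

lemma f_cont: "continuous_on UNIV f"
  using deriv has_derivative_continuous continuous_at_imp_continuous_on by blast

lemma grad_cont: "continuous_on UNIV grad"
proof (rule lipschitz_on_continuous_on)
  show "L-lipschitz_on UNIV grad"
    using L_nonneg smooth by (auto intro!: lipschitz_onI simp: dist_norm)
qed

lemma f_meas[measurable]: "f \<in> borel_measurable borel"
  using f_cont by (rule borel_measurable_continuous_onI)

lemma grad_meas[measurable]: "grad \<in> borel_measurable borel"
  using grad_cont by (rule borel_measurable_continuous_onI)

lemma X0: "X u 0 = x1" and Z0: "Z u 0 = 0" and P0: "P u 0 = 0"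
  by (simp_all add: X_def Z_def P_def hlf_x_def hlf_z_def hlf_p_def)

lemma XS: "X u (Suc k) = X u k - P u k"
  by (simp add: X_def P_def hlf_x_def hlf_p_def Let_def split: prod.split)

lemma ZS: "Z u (Suc k) = (if k = 0 then (f (X u 1 + r *\<^sub>R u 1) - f (X u 1 - r *\<^sub>R u 1)) / 2
     else (1 - \<beta>) * Z u k + f (X u (Suc k) + r *\<^sub>R u (Suc k)) - f (X u k + r *\<^sub>R u k))"
  by (simp add: X_def Z_def P_def hlf_x_def hlf_z_def hlf_p_def Let_def split: prod.split)

lemma GkD: "Gk u k = (real DIM('a) / r * Z u k) *\<^sub>R u k"
  by (simp add: Gk_def Z_def hlf_g_def)

lemma PS: "P u (Suc k) = \<alpha> *\<^sub>R P u k + \<eta> *\<^sub>R Gk u (Suc k)"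
  by (simp add: X_def Z_def P_def Gk_def hlf_g_def hlf_x_def hlf_z_def hlf_p_def Let_def split: prod.split)

lemma X1: "X u 1 = x1" using XS[of u 0] by (simp add: X0 P0)

lemma taylor: "\<bar>f (x + h) - f x - grad x \<bullet> h\<bar> \<le> L / 2 * (norm h)^2"
proof -
  have Dt: "((\<lambda>t. f (x + t *\<^sub>R h)) has_real_derivative (grad (x + t *\<^sub>R h) \<bullet> h)) (at t)" for t
  proof -
    have "((\<lambda>t. x + t *\<^sub>R h) has_derivative (\<lambda>s. s *\<^sub>R h)) (at t)"
      by (auto intro!: derivative_eq_intros)
    from has_derivative_compose[OF this deriv]
    have "((\<lambda>t. f (x + t *\<^sub>R h)) has_derivative (\<lambda>s. grad (x + t *\<^sub>R h) \<bullet> (s *\<^sub>R h))) (at t)" .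
    moreover have "(\<lambda>s. grad (x + t *\<^sub>R h) \<bullet> (s *\<^sub>R h)) = (\<lambda>s. (grad (x + t *\<^sub>R h) \<bullet> h) * s)"
      by (auto simp: fun_eq_iff)
    ultimately show ?thesis by (simp add: has_field_derivative_def)
  qed
  have gb: "\<bar>(grad (x + t *\<^sub>R h) - grad x) \<bullet> h\<bar> \<le> L * t * (norm h)^2" if "0 \<le> t" for t
  proof -
    have "\<bar>(grad (x + t *\<^sub>R h) - grad x) \<bullet> h\<bar> \<le> norm (grad (x + t *\<^sub>R h) - grad x) * norm h"
      by (rule Cauchy_Schwarz_ineq2)
    also have "\<dots> \<le> (L * norm (t *\<^sub>R h)) * norm h"
      using smooth[of "x + t *\<^sub>R h" x] by (intro mult_right_mono) auto
    also have "\<dots> = L * t * (norm h)^2" using that by (simp add: power2_eq_square)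
    finally show ?thesis .
  qed
  define \<psi>1 where "\<psi>1 t = f (x + t *\<^sub>R h) - t * (grad x \<bullet> h) - L / 2 * t^2 * (norm h)^2" for t
  define \<psi>2 where "\<psi>2 t = f (x + t *\<^sub>R h) - t * (grad x \<bullet> h) + L / 2 * t^2 * (norm h)^2" for t
  have "\<psi>1 1 \<le> \<psi>1 0"
  proof (rule DERIV_nonpos_imp_nonincreasing[of 0 1])
    fix t :: real assume t: "0 \<le> t" "t \<le> 1"
    have "(\<psi>1 has_real_derivative (grad (x + t *\<^sub>R h) \<bullet> h - grad x \<bullet> h - L / 2 * (2 * t) * (norm h)^2)) (at t)"
      unfolding \<psi>1_def by (auto intro!: derivative_eq_intros Dt simp: power2_eq_square)
    moreover have "grad (x + t *\<^sub>R h) \<bullet> h - grad x \<bullet> h - L / 2 * (2 * t) * (norm h)^2 \<le> 0"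
      using gb[OF t(1)] by (simp add: inner_diff_left abs_le_iff)
    ultimately show "\<exists>y. (\<psi>1 has_real_derivative y) (at t) \<and> y \<le> 0" by blast
  qed simp
  moreover have "\<psi>2 0 \<le> \<psi>2 1"
  proof (rule DERIV_nonneg_imp_nondecreasing[of 0 1])
    fix t :: real assume t: "0 \<le> t" "t \<le> 1"
    have "(\<psi>2 has_real_derivative (grad (x + t *\<^sub>R h) \<bullet> h - grad x \<bullet> h + L / 2 * (2 * t) * (norm h)^2)) (at t)"
      unfolding \<psi>2_def by (auto intro!: derivative_eq_intros Dt simp: power2_eq_square)
    moreover have "grad (x + t *\<^sub>R h) \<bullet> h - grad x \<bullet> h + L / 2 * (2 * t) * (norm h)^2 \<ge> 0"
      using gb[OF t(1)] by (simp add: inner_diff_left abs_le_iff)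
    ultimately show "\<exists>y. (\<psi>2 has_real_derivative y) (at t) \<and> y \<ge> 0" by blast
  qed simp
  ultimately have "f (x + h) - grad x \<bullet> h - L / 2 * (norm h)^2 \<le> f x" "f x \<le> f (x + h) - grad x \<bullet> h + L / 2 * (norm h)^2"
    by (simp_all add: \<psi>1_def \<psi>2_def)
  then show ?thesis by (simp only: abs_le_iff) linarith
qed

end


context hlfl begin

lemma X1s: "X u (Suc 0) = x1" using X1 by simp

lemma meas_state:
  fixes V :: "nat \<Rightarrow> 'm \<Rightarrow> 'a" and N :: "'m measure"
  assumes V[measurable]: "\<And>i. V i \<in> borel_measurable N"
  shows "(\<lambda>\<omega>. X (\<lambda>i. V i \<omega>) k) \<in> borel_measurable N \<and> (\<lambda>\<omega>. Z (\<lambda>i. V i \<omega>) k) \<in> borel_measurable N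
       \<and> (\<lambda>\<omega>. P (\<lambda>i. V i \<omega>) k) \<in> borel_measurable N"
proof (induction k)
  case 0 then show ?case by (simp add: X0 Z0 P0)
next
  case (Suc k)
  have mX[measurable]: "(\<lambda>\<omega>. X (\<lambda>i. V i \<omega>) k) \<in> borel_measurable N"
    and mZ[measurable]: "(\<lambda>\<omega>. Z (\<lambda>i. V i \<omega>) k) \<in> borel_measurable N"
    and mP[measurable]: "(\<lambda>\<omega>. P (\<lambda>i. V i \<omega>) k) \<in> borel_measurable N" using Suc by auto
  have mX'[measurable]: "(\<lambda>\<omega>. X (\<lambda>i. V i \<omega>) (Suc k)) \<in> borel_measurable N"
    unfolding XS by measurable
  have mX1[measurable]: "(\<lambda>\<omega>. X (\<lambda>i. V i \<omega>) 1) \<in> borel_measurable N"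
    unfolding X1 by measurable
  have mZ'[measurable]: "(\<lambda>\<omega>. Z (\<lambda>i. V i \<omega>) (Suc k)) \<in> borel_measurable N"
  proof (cases "k = 0")
    case True
    then have "(\<lambda>\<omega>. Z (\<lambda>i. V i \<omega>) (Suc k)) = (\<lambda>\<omega>. (f (x1 + r *\<^sub>R V 1 \<omega>) - f (x1 - r *\<^sub>R V 1 \<omega>)) / 2)"
      by (simp add: ZS X1s)
    then show ?thesis by simp
  next
    case False then show ?thesis unfolding ZS by simp measurable
  qed
  have "(\<lambda>\<omega>. P (\<lambda>i. V i \<omega>) (Suc k)) \<in> borel_measurable N"
    unfolding PS GkD by measurable
  then show ?case using mX' mZ' by blast
qed

lemma local_state:
  assumes "\<And>i. 1 \<le> i \<Longrightarrow> i \<le> k \<Longrightarrow> u i = v i"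
  shows "X u k = X v k \<and> Z u k = Z v k \<and> P u k = P v k"
  using assms
proof (induction k)
  case 0 then show ?case by (simp add: X0 Z0 P0)
next
  case (Suc k)
  then have IH: "X u k = X v k" "Z u k = Z v k" "P u k = P v k" by auto
  have uv: "u (Suc k) = v (Suc k)" "k \<ge> 1 \<Longrightarrow> u k = v k" "u 1 = v 1" using Suc.prems by auto
  have x: "X u (Suc k) = X v (Suc k)" by (simp add: XS IH)
  have z: "Z u (Suc k) = Z v (Suc k)"
    using x uv IH by (cases "k = 0") (simp_all add: ZS X1)
  have "P u (Suc k) = P v (Suc k)" by (simp add: PS GkD IH z uv)
  with x z show ?case by blast
qed

lemma bnd_state:
  "\<exists>B. 0 \<le> B \<and> (\<forall>u. (\<forall>i. norm (u i) = 1) \<longrightarrow> norm (X u k) \<le> B \<and> \<bar>Z u k\<bar> \<le> B \<and> norm (P u k) \<le> B)"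
proof (induction k)
  case 0 then show ?case by (intro exI[of _ "norm x1"]) (simp add: X0 Z0 P0)
next
  case (Suc k)
  then obtain B where B0: "0 \<le> B" and B: "\<And>u. (\<forall>i. norm (u i) = 1) \<Longrightarrow> norm (X u k) \<le> B \<and> \<bar>Z u k\<bar> \<le> B \<and> norm (P u k) \<le> B"
    by blast
  define Bz where "Bz = G * r + \<bar>1 - \<beta>\<bar> * B + G * (B + 2 * r)"
  define B' where "B' = 2 * B + Bz + \<alpha> * B + \<eta> * (real DIM('a) / r) * Bz"
  have G0: "0 \<le> G" by (rule G_nonneg)
  have Bz0: "0 \<le> Bz" unfolding Bz_def using G0 B0 r by (intro add_nonneg_nonneg mult_nonneg_nonneg) auto
  have B'0: "0 \<le> B'" unfolding B'_def using Bz0 B0 \<alpha> \<eta> r by (intro add_nonneg_nonneg mult_nonneg_nonneg) auto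
  show ?case
  proof (intro exI[of _ B'] conjI allI impI B'0)
    fix u :: "nat \<Rightarrow> 'a" assume u: "\<forall>i. norm (u i) = 1"
    note Bu = B[OF u]
    have x: "norm (X u (Suc k)) \<le> 2 * B"
      unfolding XS using Bu norm_triangle_ineq4[of "X u k" "P u k"] by linarith
    have z: "\<bar>Z u (Suc k)\<bar> \<le> Bz"
    proof (cases "k = 0")
      case True
      have "\<bar>f (X u 1 + r *\<^sub>R u 1) - f (X u 1 - r *\<^sub>R u 1)\<bar> \<le> G * norm ((X u 1 + r *\<^sub>R u 1) - (X u 1 - r *\<^sub>R u 1))"
        by (rule lip)
      also have "\<dots> = G * (2 * r)" using u r by (simp add: scaleR_2[symmetric] del: scaleR_2)
      finally have "\<bar>Z u (Suc k)\<bar> \<le> G * r" using True by (simp add: ZS)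
      also have "\<dots> \<le> Bz" unfolding Bz_def using G0 B0 r by (intro add_increasing2 mult_nonneg_nonneg) auto
      finally show ?thesis .
    next
      case False
      have nb: "norm ((X u (Suc k) + r *\<^sub>R u (Suc k)) - (X u k + r *\<^sub>R u k)) = norm (r *\<^sub>R u (Suc k) - r *\<^sub>R u k - P u k)"
        by (simp add: XS algebra_simps)
      also have "\<dots> \<le> norm (r *\<^sub>R u (Suc k)) + norm (r *\<^sub>R u k) + norm (P u k)"
        by (meson norm_triangle_ineq4 add_mono order_trans order_refl)
      also have "\<dots> \<le> B + 2 * r" using u r Bu by simp
      finally have "norm ((X u (Suc k) + r *\<^sub>R u (Suc k)) - (X u k + r *\<^sub>R u k)) \<le> B + 2 * r" .
      then have "G * norm ((X u (Suc k) + r *\<^sub>R u (Suc k)) - (X u k + r *\<^sub>R u k)) \<le> G * (B + 2 * r)"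
        using G0 by (rule mult_left_mono)
      with lip have A: "\<bar>f (X u (Suc k) + r *\<^sub>R u (Suc k)) - f (X u k + r *\<^sub>R u k)\<bar> \<le> G * (B + 2 * r)"
        by (rule order_trans)
      have "\<bar>Z u (Suc k)\<bar> \<le> \<bar>1 - \<beta>\<bar> * \<bar>Z u k\<bar> + \<bar>f (X u (Suc k) + r *\<^sub>R u (Suc k)) - f (X u k + r *\<^sub>R u k)\<bar>"
        using False by (simp add: ZS abs_mult[symmetric] abs_triangle_ineq[THEN order_trans])
      also have "\<dots> \<le> \<bar>1 - \<beta>\<bar> * B + G * (B + 2 * r)"
        using Bu A by (intro add_mono mult_left_mono) auto
      also have "\<dots> \<le> Bz" unfolding Bz_def using G0 r by simp
      finally show ?thesis .
    qed
    have p: "norm (P u (Suc k)) \<le> \<alpha> * B + \<eta> * (real DIM('a) / r) * Bz"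
    proof -
      have "norm (P u (Suc k)) \<le> norm (\<alpha> *\<^sub>R P u k) + norm (\<eta> *\<^sub>R Gk u (Suc k))"
        unfolding PS by (rule norm_triangle_ineq)
      also have "norm (\<alpha> *\<^sub>R P u k) \<le> \<alpha> * B" using Bu \<alpha> by (simp add: mult_left_mono)
      also have "norm (\<eta> *\<^sub>R Gk u (Suc k)) = \<eta> * (real DIM('a) / r) * \<bar>Z u (Suc k)\<bar>"
        using u \<eta> r by (simp add: GkD abs_mult)
      also have "\<dots> \<le> \<eta> * (real DIM('a) / r) * Bz" using z \<eta> r by (intro mult_left_mono) auto
      finally show ?thesis by simp
    qed
    show "norm (X u (Suc k)) \<le> B'" using x unfolding B'_def using Bz0 B0 \<alpha> \<eta> r p by (smt (verit) norm_ge_zero)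
    show "\<bar>Z u (Suc k)\<bar> \<le> B'" using z unfolding B'_def using Bz0 B0 \<alpha> \<eta> r p by (smt (verit) norm_ge_zero)
    show "norm (P u (Suc k)) \<le> B'" using p unfolding B'_def using Bz0 B0 by simp
  qed
qed

end


lemma key_indep:
  fixes M :: "'m measure" and V :: "nat \<Rightarrow> 'm \<Rightarrow> 'a::euclidean_space"
    and \<Phi> :: "(nat \<Rightarrow> 'a) \<times> 'a \<Rightarrow> real"
  assumes P: "prob_space M"
    and ind: "prob_space.indep_vars M (\<lambda>_. borel) V {1..}"
    and dist: "distr M borel (V k) = uniform_sphere"
    and k: "1 \<le> k"
    and Phi[measurable]: "\<Phi> \<in> borel_measurable (PiM {1..<k} (\<lambda>_. borel) \<Otimes>\<^sub>M borel)"
    and bnd: "\<And>z. \<bar>\<Phi> z\<bar> \<le> B"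
  shows "(\<integral>\<omega>. \<Phi> (restrict (\<lambda>i. V i \<omega>) {1..<k}, V k \<omega>) \<partial>M)
       = (\<integral>\<omega>. (\<integral>u. \<Phi> (restrict (\<lambda>i. V i \<omega>) {1..<k}, u) \<partial>uniform_sphere) \<partial>M)"
proof -
  interpret prob_space M by (rule P)
  let ?N = "PiM {1..<k} (\<lambda>_. borel :: 'a measure)"
  let ?Nk = "PiM {k} (\<lambda>_. borel :: 'a measure)"
  let ?X = "\<lambda>\<omega>. restrict (\<lambda>i. V i \<omega>) {1..<k}"
  let ?Y = "\<lambda>\<omega>. restrict (\<lambda>i. V i \<omega>) {k}"
  define \<Phi>' where "\<Phi>' z = \<Phi> (fst z, snd z k)" for z :: "(nat \<Rightarrow> 'a) \<times> (nat \<Rightarrow> 'a)"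
  have iv: "indep_var ?N ?X ?Nk ?Y"
    by (rule indep_var_restrict[OF ind]) (use k in auto)
  have rvX[measurable]: "?X \<in> measurable M ?N" using indep_var_rv1[OF iv] .
  have rvY[measurable]: "?Y \<in> measurable M ?Nk" using indep_var_rv2[OF iv] .
  have Vk[measurable]: "V k \<in> borel_measurable M"
    using measurable_compose[OF rvY measurable_component_singleton[of k "{k}"]] by simp
  have Phi'[measurable]: "\<Phi>' \<in> borel_measurable (?N \<Otimes>\<^sub>M ?Nk)"
    unfolding \<Phi>'_def by measurable
  have joint: "distr M ?N ?X \<Otimes>\<^sub>M distr M ?Nk ?Y = distr M (?N \<Otimes>\<^sub>M ?Nk) (\<lambda>\<omega>. (?X \<omega>, ?Y \<omega>))"
    using iv unfolding indep_var_distribution_eq by blast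
  interpret PX: prob_space "distr M ?N ?X" by (rule prob_space_distr[OF rvX])
  interpret PY: prob_space "distr M ?Nk ?Y" by (rule prob_space_distr[OF rvY])
  interpret PP: pair_prob_space "distr M ?N ?X" "distr M ?Nk ?Y" ..
  have PhiP[measurable]: "\<Phi>' \<in> borel_measurable (distr M ?N ?X \<Otimes>\<^sub>M distr M ?Nk ?Y)"
    using Phi' by (simp cong: measurable_cong_sets)
  have int: "integrable (distr M ?N ?X \<Otimes>\<^sub>M distr M ?Nk ?Y) \<Phi>'"
    by (rule PP.integrable_const_bound[where B=B]) (use bnd PhiP in \<open>auto simp: \<Phi>'_def\<close>)
  have inner: "(\<integral>y. \<Phi>' (x, y) \<partial>distr M ?Nk ?Y) = (\<integral>u. \<Phi> (x, u) \<partial>uniform_sphere)" if x: "x \<in> space ?N" for x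
  proof -
    have m1: "(\<lambda>u. \<Phi> (x, u)) \<in> borel_measurable borel"
      using measurable_Pair2[OF Phi x] by simp
    have m2: "(\<lambda>y. \<Phi>' (x, y)) \<in> borel_measurable ?Nk"
      using measurable_Pair2[OF Phi' x] by simp
    have "(\<integral>y. \<Phi>' (x, y) \<partial>distr M ?Nk ?Y) = (\<integral>\<omega>. \<Phi>' (x, ?Y \<omega>) \<partial>M)"
      by (rule integral_distr[OF rvY m2])
    also have "\<dots> = (\<integral>\<omega>. \<Phi> (x, V k \<omega>) \<partial>M)" by (simp add: \<Phi>'_def)
    also have "\<dots> = (\<integral>u. \<Phi> (x, u) \<partial>distr M borel (V k))"
      by (rule integral_distr[OF Vk m1, symmetric])
    finally show ?thesis by (simp add: dist)
  qed
  have "(\<integral>\<omega>. \<Phi> (?X \<omega>, V k \<omega>) \<partial>M) = (\<integral>\<omega>. \<Phi>' (?X \<omega>, ?Y \<omega>) \<partial>M)"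
    by (simp add: \<Phi>'_def)
  also have "\<dots> = (\<integral>z. \<Phi>' z \<partial>distr M (?N \<Otimes>\<^sub>M ?Nk) (\<lambda>\<omega>. (?X \<omega>, ?Y \<omega>)))"
    by (rule integral_distr[symmetric]) (rule measurable_Pair[OF rvX rvY], rule Phi')
  also have "\<dots> = (\<integral>z. \<Phi>' z \<partial>(distr M ?N ?X \<Otimes>\<^sub>M distr M ?Nk ?Y))" unfolding joint by (rule refl)
  also have "\<dots> = (\<integral>x. (\<integral>y. \<Phi>' (x, y) \<partial>distr M ?Nk ?Y) \<partial>distr M ?N ?X)"
    by (rule PP.integral_fst'[OF int, symmetric])
  also have "\<dots> = (\<integral>x. (\<integral>u. \<Phi> (x, u) \<partial>uniform_sphere) \<partial>distr M ?N ?X)"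
    by (intro Bochner_Integration.integral_cong refl inner) simp
  also have "\<dots> = (\<integral>\<omega>. (\<integral>u. \<Phi> (?X \<omega>, u) \<partial>uniform_sphere) \<partial>M)"
  proof (rule integral_distr)
    show "?X \<in> measurable M ?N" by (rule rvX)
    interpret PS: prob_space "uniform_sphere :: 'a measure" by (rule prob_sphere)
    have "(\<lambda>x. \<integral>u. \<Phi> (x, u) \<partial>uniform_sphere) \<in> borel_measurable ?N"
      by (rule PS.borel_measurable_lebesgue_integral) (use Phi in \<open>simp cong: measurable_cong_sets\<close>)
    then show "(\<lambda>x. \<integral>u. \<Phi> (x, u) \<partial>uniform_sphere) \<in> borel_measurable ?N" .
  qed
  finally show ?thesis .
qed


definition nz :: "'a::euclidean_space \<Rightarrow> 'a" where
  "nz v = (if norm v = 1 then v else (SOME b. b \<in> Basis))"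

lemma norm_nz[simp]: "norm (nz v) = 1"
proof -
  have "(SOME b. b \<in> (Basis :: 'a set)) \<in> Basis" by (rule someI_ex) (use nonempty_Basis in blast)
  then show ?thesis by (simp add: nz_def)
qed

lemma nz_id: "norm v = 1 \<Longrightarrow> nz v = v" by (simp add: nz_def)

lemma nz_meas[measurable]: "nz \<in> borel_measurable borel"
  unfolding nz_def by measurable

definition Ek :: "nat \<Rightarrow> (nat \<Rightarrow> 'a::euclidean_space) \<Rightarrow> nat \<Rightarrow> 'a" where
  "Ek k y i = (if i \<in> {1..<k} then nz (y i) else nz 0)"

lemma norm_Ek[simp]: "norm (Ek k y i) = 1" by (simp add: Ek_def)

lemma Ek_meas[measurable]: "(\<lambda>y. Ek k y i) \<in> borel_measurable (PiM {1..<k} (\<lambda>_. borel))"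
proof (cases "i \<in> {1..<k}")
  case True
  then show ?thesis unfolding Ek_def
    by (simp add: measurable_compose[OF measurable_component_singleton[OF True] nz_meas])
next
  case False
  then have e: "(\<lambda>y. Ek k y i) = (\<lambda>y. nz 0)" unfolding Ek_def by (intro ext) (simp only: if_False)
  show ?thesis unfolding e by simp
qed

lemma key_apply:
  fixes M :: "'m measure" and V :: "nat \<Rightarrow> 'm \<Rightarrow> 'a::euclidean_space"
    and \<Psi> :: "(nat \<Rightarrow> 'a) \<Rightarrow> real" and W :: "(nat \<Rightarrow> 'a) \<Rightarrow> 'a"
  assumes P: "prob_space M"
    and ind: "prob_space.indep_vars M (\<lambda>_. borel) V {1..}"
    and dist: "distr M borel (V k) = uniform_sphere"
    and k: "1 \<le> k"
    and unit: "\<And>i \<omega>. norm (V i \<omega>) = 1"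
    and locP: "\<And>u v. (\<And>i. 1 \<le> i \<Longrightarrow> i < k \<Longrightarrow> u i = v i) \<Longrightarrow> \<Psi> u = \<Psi> v"
    and locW: "\<And>u v. (\<And>i. 1 \<le> i \<Longrightarrow> i < k \<Longrightarrow> u i = v i) \<Longrightarrow> W u = W v"
    and mP[measurable]: "(\<lambda>y. \<Psi> (Ek k y)) \<in> borel_measurable (PiM {1..<k} (\<lambda>_. borel))"
    and mW[measurable]: "(\<lambda>y. W (Ek k y)) \<in> borel_measurable (PiM {1..<k} (\<lambda>_. borel))"
    and bP: "\<And>u. (\<And>i. norm (u i) = 1) \<Longrightarrow> \<bar>\<Psi> u\<bar> \<le> B"
    and bW: "\<And>u. (\<And>i. norm (u i) = 1) \<Longrightarrow> norm (W u) \<le> B"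
  shows key_mean: "(\<integral>\<omega>. \<Psi> (\<lambda>i. V i \<omega>) * (W (\<lambda>i. V i \<omega>) \<bullet> V k \<omega>) \<partial>M) = 0"
    and key_sq: "(\<integral>\<omega>. (W (\<lambda>i. V i \<omega>) \<bullet> V k \<omega>)^2 \<partial>M) = (\<integral>\<omega>. (norm (W (\<lambda>i. V i \<omega>)))^2 \<partial>M) / real DIM('a)"
proof -
  let ?X = "\<lambda>\<omega>. restrict (\<lambda>i. V i \<omega>) {1..<k}"
  have eqE: "\<And>\<omega> i. 1 \<le> i \<Longrightarrow> i < k \<Longrightarrow> V i \<omega> = Ek k (?X \<omega>) i"
    by (simp add: Ek_def nz_id unit)
  have eqP: "\<Psi> (\<lambda>i. V i \<omega>) = \<Psi> (Ek k (?X \<omega>))" for \<omega> by (rule locP) (simp add: eqE)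
  have eqW: "W (\<lambda>i. V i \<omega>) = W (Ek k (?X \<omega>))" for \<omega> by (rule locW) (simp add: eqE)
  have B0: "0 \<le> B" using bP[of "\<lambda>_. nz 0"] by simp
  have bP': "\<bar>\<Psi> (Ek k y)\<bar> \<le> B" for y by (rule bP) simp
  have bW': "norm (W (Ek k y)) \<le> B" for y by (rule bW) simp
  interpret PS: prob_space "uniform_sphere :: 'a measure" by (rule prob_sphere)
  have nzAE: "AE u in uniform_sphere. nz u = (u :: 'a)" using AE_sphere by eventually_elim (simp add: nz_id)
  define \<Phi>1 where "\<Phi>1 z = \<Psi> (Ek k (fst z)) * (W (Ek k (fst z)) \<bullet> nz (snd z))" for z :: "(nat \<Rightarrow> 'a) \<times> 'a"
  have m1: "\<Phi>1 \<in> borel_measurable (PiM {1..<k} (\<lambda>_. borel) \<Otimes>\<^sub>M borel)" unfolding \<Phi>1_def by measurable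
  have b1: "\<bar>\<Phi>1 z\<bar> \<le> B * B" for z
  proof -
    have "\<bar>W (Ek k (fst z)) \<bullet> nz (snd z)\<bar> \<le> norm (W (Ek k (fst z))) * norm (nz (snd z))" by (rule Cauchy_Schwarz_ineq2)
    then have "\<bar>W (Ek k (fst z)) \<bullet> nz (snd z)\<bar> \<le> B" using bW'[of "fst z"] by simp
    then show ?thesis unfolding \<Phi>1_def abs_mult using bP'[of "fst z"] B0 by (intro mult_mono) auto
  qed
  have "(\<integral>\<omega>. \<Psi> (\<lambda>i. V i \<omega>) * (W (\<lambda>i. V i \<omega>) \<bullet> V k \<omega>) \<partial>M) = (\<integral>\<omega>. \<Phi>1 (?X \<omega>, V k \<omega>) \<partial>M)"
    by (simp add: \<Phi>1_def eqP eqW nz_id unit)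
  also have "\<dots> = (\<integral>\<omega>. (\<integral>u. \<Phi>1 (?X \<omega>, u) \<partial>uniform_sphere) \<partial>M)"
    by (rule key_indep[OF P ind dist k m1 b1])
  also have "\<dots> = (\<integral>\<omega>. 0 \<partial>M)"
  proof (intro Bochner_Integration.integral_cong refl)
    fix \<omega>
    have "(\<integral>u. \<Phi>1 (?X \<omega>, u) \<partial>uniform_sphere) = (\<integral>u. \<Psi> (Ek k (?X \<omega>)) * (W (Ek k (?X \<omega>)) \<bullet> u) \<partial>uniform_sphere)"
    proof (rule integral_cong_AE)
      show "AE u in uniform_sphere. \<Phi>1 (?X \<omega>, u) = \<Psi> (Ek k (?X \<omega>)) * (W (Ek k (?X \<omega>)) \<bullet> u)"
        using nzAE by eventually_elim (simp add: \<Phi>1_def)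
    qed (simp_all add: \<Phi>1_def)
    also have "\<dots> = \<Psi> (Ek k (?X \<omega>)) * (\<integral>u. (W (Ek k (?X \<omega>)) \<bullet> u) \<partial>uniform_sphere)" by simp
    also have "\<dots> = 0" by (simp add: sphere_mean)
    finally show "(\<integral>u. \<Phi>1 (?X \<omega>, u) \<partial>uniform_sphere) = 0" .
  qed
  finally show "(\<integral>\<omega>. \<Psi> (\<lambda>i. V i \<omega>) * (W (\<lambda>i. V i \<omega>) \<bullet> V k \<omega>) \<partial>M) = 0" by simp
  define \<Phi>2 where "\<Phi>2 z = (W (Ek k (fst z)) \<bullet> nz (snd z))^2" for z :: "(nat \<Rightarrow> 'a) \<times> 'a"
  have m2: "\<Phi>2 \<in> borel_measurable (PiM {1..<k} (\<lambda>_. borel) \<Otimes>\<^sub>M borel)" unfolding \<Phi>2_def by measurable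
  have b2: "\<bar>\<Phi>2 z\<bar> \<le> B * B" for z
  proof -
    have "\<bar>W (Ek k (fst z)) \<bullet> nz (snd z)\<bar> \<le> norm (W (Ek k (fst z))) * norm (nz (snd z))" by (rule Cauchy_Schwarz_ineq2)
    then have "\<bar>W (Ek k (fst z)) \<bullet> nz (snd z)\<bar> \<le> B" using bW'[of "fst z"] by simp
    then show ?thesis unfolding \<Phi>2_def power2_eq_square abs_mult using B0 by (intro mult_mono) auto
  qed
  have "(\<integral>\<omega>. (W (\<lambda>i. V i \<omega>) \<bullet> V k \<omega>)^2 \<partial>M) = (\<integral>\<omega>. \<Phi>2 (?X \<omega>, V k \<omega>) \<partial>M)"
    by (simp add: \<Phi>2_def eqW nz_id unit)
  also have "\<dots> = (\<integral>\<omega>. (\<integral>u. \<Phi>2 (?X \<omega>, u) \<partial>uniform_sphere) \<partial>M)"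
    by (rule key_indep[OF P ind dist k m2 b2])
  also have "\<dots> = (\<integral>\<omega>. (norm (W (\<lambda>i. V i \<omega>)))^2 / real DIM('a) \<partial>M)"
  proof (intro Bochner_Integration.integral_cong refl)
    fix \<omega>
    have "(\<integral>u. \<Phi>2 (?X \<omega>, u) \<partial>uniform_sphere) = (\<integral>u. (W (Ek k (?X \<omega>)) \<bullet> u)^2 \<partial>uniform_sphere)"
    proof (rule integral_cong_AE)
      show "AE u in uniform_sphere. \<Phi>2 (?X \<omega>, u) = (W (Ek k (?X \<omega>)) \<bullet> u)^2"
        using nzAE by eventually_elim (simp add: \<Phi>2_def)
    qed (simp_all add: \<Phi>2_def)
    also have "\<dots> = (norm (W (\<lambda>i. V i \<omega>)))^2 / real DIM('a)" by (simp add: sphere_sq eqW)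
    finally show "(\<integral>u. \<Phi>2 (?X \<omega>, u) \<partial>uniform_sphere) = (norm (W (\<lambda>i. V i \<omega>)))^2 / real DIM('a)" .
  qed
  also have "\<dots> = (\<integral>\<omega>. (norm (W (\<lambda>i. V i \<omega>)))^2 \<partial>M) / real DIM('a)" by simp
  finally show "(\<integral>\<omega>. (W (\<lambda>i. V i \<omega>) \<bullet> V k \<omega>)^2 \<partial>M) = (\<integral>\<omega>. (norm (W (\<lambda>i. V i \<omega>)))^2 \<partial>M) / real DIM('a)" .
qed


context hlfl begin

definition "mm u j = (if j = 0 then 0 else r * (grad (X u j) \<bullet> u j))"
definition "SS u k = rec_nat 0 (\<lambda>j s. (1 - \<beta>) * s + mm u (Suc j)) k"
definition "MM u k = mm u k - \<beta> * SS u (k - 1)"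

lemma SS0[simp]: "SS u 0 = 0" and SSS: "SS u (Suc k) = (1 - \<beta>) * SS u k + mm u (Suc k)"
  by (simp_all add: SS_def)

lemma meas_all:
  fixes V :: "nat \<Rightarrow> 'm \<Rightarrow> 'a" and N :: "'m measure"
  assumes V[measurable]: "\<And>i. V i \<in> borel_measurable N"
  shows meas_X[measurable]: "(\<lambda>\<omega>. X (\<lambda>i. V i \<omega>) k) \<in> borel_measurable N"
    and meas_Z[measurable]: "(\<lambda>\<omega>. Z (\<lambda>i. V i \<omega>) k) \<in> borel_measurable N"
    and meas_P[measurable]: "(\<lambda>\<omega>. P (\<lambda>i. V i \<omega>) k) \<in> borel_measurable N"
    and meas_G[measurable]: "(\<lambda>\<omega>. Gk (\<lambda>i. V i \<omega>) k) \<in> borel_measurable N"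
    and meas_m[measurable]: "(\<lambda>\<omega>. mm (\<lambda>i. V i \<omega>) k) \<in> borel_measurable N"
    and meas_S[measurable]: "(\<lambda>\<omega>. SS (\<lambda>i. V i \<omega>) k) \<in> borel_measurable N"
    and meas_M[measurable]: "(\<lambda>\<omega>. MM (\<lambda>i. V i \<omega>) k) \<in> borel_measurable N"
proof -
  have mX[measurable]: "\<And>k. (\<lambda>\<omega>. X (\<lambda>i. V i \<omega>) k) \<in> borel_measurable N"
    and mZ[measurable]: "\<And>k. (\<lambda>\<omega>. Z (\<lambda>i. V i \<omega>) k) \<in> borel_measurable N"
    and mP[measurable]: "\<And>k. (\<lambda>\<omega>. P (\<lambda>i. V i \<omega>) k) \<in> borel_measurable N"
    using meas_state[OF V] by auto
  show "(\<lambda>\<omega>. X (\<lambda>i. V i \<omega>) k) \<in> borel_measurable N" "(\<lambda>\<omega>. Z (\<lambda>i. V i \<omega>) k) \<in> borel_measurable N"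
    "(\<lambda>\<omega>. P (\<lambda>i. V i \<omega>) k) \<in> borel_measurable N" by measurable
  show "(\<lambda>\<omega>. Gk (\<lambda>i. V i \<omega>) k) \<in> borel_measurable N" unfolding GkD by measurable
  have mm[measurable]: "\<And>k. (\<lambda>\<omega>. mm (\<lambda>i. V i \<omega>) k) \<in> borel_measurable N" unfolding mm_def by measurable
  then show "(\<lambda>\<omega>. mm (\<lambda>i. V i \<omega>) k) \<in> borel_measurable N" .
  have mS[measurable]: "\<And>k. (\<lambda>\<omega>. SS (\<lambda>i. V i \<omega>) k) \<in> borel_measurable N"
  proof -
    fix k show "(\<lambda>\<omega>. SS (\<lambda>i. V i \<omega>) k) \<in> borel_measurable N"
    proof (induction k)
      case (Suc k)
      note [measurable] = Suc
      show ?case unfolding SSS by measurable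
    qed simp
  qed
  then show "(\<lambda>\<omega>. SS (\<lambda>i. V i \<omega>) k) \<in> borel_measurable N" .
  show "(\<lambda>\<omega>. MM (\<lambda>i. V i \<omega>) k) \<in> borel_measurable N" unfolding MM_def by measurable
qed

lemma loc_all:
  assumes "\<And>i. 1 \<le> i \<Longrightarrow> i \<le> k \<Longrightarrow> u i = v i"
  shows "X u k = X v k" "Z u k = Z v k" "P u k = P v k" "Gk u k = Gk v k"
    "mm u k = mm v k" "SS u k = SS v k" "MM u k = MM v k"
proof -
  have st: "\<And>j. j \<le> k \<Longrightarrow> X u j = X v j \<and> Z u j = Z v j \<and> P u j = P v j"
    using assms by (intro local_state) auto
  show x: "X u k = X v k" "Z u k = Z v k" "P u k = P v k" using st[of k] by auto
  have uk: "k \<ge> 1 \<Longrightarrow> u k = v k" using assms by auto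
  show "Gk u k = Gk v k" using x uk by (cases "k = 0") (auto simp: GkD Z0)
  have mj: "\<And>j. j \<le> k \<Longrightarrow> mm u j = mm v j"
  proof -
    fix j assume j: "j \<le> k"
    show "mm u j = mm v j"
    proof (cases "j = 0")
      case True then show ?thesis by (simp add: mm_def)
    next
      case False then show ?thesis using st[OF j] assms[of j] j by (simp add: mm_def)
    qed
  qed
  show "mm u k = mm v k" by (rule mj) simp
  have sj: "\<And>j. j \<le> k \<Longrightarrow> SS u j = SS v j"
  proof -
    fix j show "j \<le> k \<Longrightarrow> SS u j = SS v j"
      by (induction j) (auto simp: SSS mj)
  qed
  show "SS u k = SS v k" by (rule sj) simp
  show "MM u k = MM v k" by (simp add: MM_def mj sj)
qed

lemma bnd_grad: "\<exists>B. 0 \<le> B \<and> (\<forall>u. (\<forall>i. norm (u i) = 1) \<longrightarrow> norm (grad (X u k)) \<le> B)"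
proof -
  obtain B where B0: "0 \<le> B" and B: "\<And>u. (\<forall>i. norm (u i) = 1) \<Longrightarrow> norm (X u k) \<le> B"
    using bnd_state[of k] by blast
  have L0: "0 \<le> L" by (rule L_nonneg)
  show ?thesis
  proof (intro exI[of _ "norm (grad x1) + L * (B + norm x1)"] conjI allI impI)
    show "0 \<le> norm (grad x1) + L * (B + norm x1)" using L0 B0 by simp
    fix u :: "nat \<Rightarrow> 'a" assume u: "\<forall>i. norm (u i) = 1"
    have "norm (grad (X u k)) \<le> norm (grad x1) + norm (grad (X u k) - grad x1)"
      by (rule norm_triangle_sub)
    also have "norm (grad (X u k) - grad x1) \<le> L * norm (X u k - x1)" by (rule smooth)
    also have "\<dots> \<le> L * (B + norm x1)"
      using B[OF u] L0 by (intro mult_left_mono) (auto intro: norm_triangle_ineq4[THEN order_trans])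
    finally show "norm (grad (X u k)) \<le> norm (grad x1) + L * (B + norm x1)" by simp
  qed
qed

lemma bnd_m: "\<exists>B. 0 \<le> B \<and> (\<forall>u. (\<forall>i. norm (u i) = 1) \<longrightarrow> \<bar>mm u k\<bar> \<le> B)"
proof -
  obtain B where B0: "0 \<le> B" and B: "\<And>u. (\<forall>i. norm (u i) = 1) \<Longrightarrow> norm (grad (X u k)) \<le> B"
    using bnd_grad[of k] by blast
  show ?thesis
  proof (intro exI[of _ "r * B"] conjI allI impI)
    show "0 \<le> r * B" using r B0 by simp
    fix u :: "nat \<Rightarrow> 'a" assume u: "\<forall>i. norm (u i) = 1"
    have "\<bar>grad (X u k) \<bullet> u k\<bar> \<le> norm (grad (X u k)) * norm (u k)" by (rule Cauchy_Schwarz_ineq2)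
    also have "\<dots> \<le> B" using B[OF u] u by simp
    finally show "\<bar>mm u k\<bar> \<le> r * B" using r B0 by (simp add: mm_def abs_mult mult_left_mono)
  qed
qed

lemma bnd_S: "\<exists>B. 0 \<le> B \<and> (\<forall>u. (\<forall>i. norm (u i) = 1) \<longrightarrow> \<bar>SS u k\<bar> \<le> B)"
proof (induction k)
  case 0 then show ?case by (intro exI[of _ 0]) simp
next
  case (Suc k)
  then obtain B where B0: "0 \<le> B" and B: "\<And>u. (\<forall>i. norm (u i) = 1) \<Longrightarrow> \<bar>SS u k\<bar> \<le> B" by blast
  obtain C where C0: "0 \<le> C" and C: "\<And>u. (\<forall>i. norm (u i) = 1) \<Longrightarrow> \<bar>mm u (Suc k)\<bar> \<le> C"
    using bnd_m[of "Suc k"] by blast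
  show ?case
  proof (intro exI[of _ "\<bar>1 - \<beta>\<bar> * B + C"] conjI allI impI)
    show "0 \<le> \<bar>1 - \<beta>\<bar> * B + C" using B0 C0 by simp
    fix u :: "nat \<Rightarrow> 'a" assume u: "\<forall>i. norm (u i) = 1"
    have "\<bar>SS u (Suc k)\<bar> \<le> \<bar>1 - \<beta>\<bar> * \<bar>SS u k\<bar> + \<bar>mm u (Suc k)\<bar>"
      unfolding SSS by (simp add: abs_mult[symmetric] abs_triangle_ineq[THEN order_trans])
    also have "\<dots> \<le> \<bar>1 - \<beta>\<bar> * B + C" using B[OF u] C[OF u] by (intro add_mono mult_left_mono) auto
    finally show "\<bar>SS u (Suc k)\<bar> \<le> \<bar>1 - \<beta>\<bar> * B + C" .
  qed
qed

end


context hlfl begin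

lemma PW2: "(\<Sum>k=1..T. (norm (P u k))^2) \<le> 2 * \<eta>^2 * (1 + \<alpha>^2) / (1 - \<alpha>^2)^2 * (\<Sum>k=1..T. (norm (Gk u k))^2)"
  by (rule seq_P[OF \<alpha>]) (simp_all add: P0 PS)

lemma PW1:
  assumes u: "\<And>i. norm (u i) = 1"
  shows "(\<Sum>k=1..T. (norm (Gk u k))^2) \<le> (real DIM('a) / r)^2 * (25/8 * (\<Sum>k=1..T. (MM u k)^2)
      + 50/9 * real T * (2 * (L * r^2 / 2) / (1 - \<bar>1 - \<beta>\<bar>))^2
      + 2 / (1 - \<bar>1 - \<beta>\<bar>)^2 * (G^2 * (\<Sum>k=1..T. (norm (P u k))^2)))"
proof -
  define \<rho> where "\<rho> = L * r^2 / 2"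
  define e where "e k = f (X u k + r *\<^sub>R u k) - f (X u k)" for k
  define R where "R k = e k - mm u k" for k
  define D where "D k = f (X u k) - f (X u (k - 1))" for k
  define y1 where "y1 = Z u 1 - e 1"
  have \<rho>0: "0 \<le> \<rho>" using L_nonneg r by (simp add: \<rho>_def)
  have Rb: "\<bar>R k\<bar> \<le> \<rho>" if k: "k \<ge> 1" for k
  proof -
    have "R k = f (X u k + r *\<^sub>R u k) - f (X u k) - grad (X u k) \<bullet> (r *\<^sub>R u k)"
      using k by (simp add: R_def e_def mm_def)
    also have "\<bar>\<dots>\<bar> \<le> L / 2 * (norm (r *\<^sub>R u k))^2" by (rule taylor)
    also have "\<dots> = \<rho>" using u r by (simp add: \<rho>_def)
    finally show ?thesis .
  qed
  have y1b: "\<bar>y1\<bar> \<le> \<rho>"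
  proof -
    let ?h = "r *\<^sub>R u 1"
    define A where "A = f (x1 + ?h) - f x1"
    define B where "B = f (x1 - ?h) - f x1"
    define g where "g = grad x1 \<bullet> ?h"
    have t1: "\<bar>A - g\<bar> \<le> \<rho>"
      using taylor[of x1 ?h] u r by (simp add: \<rho>_def A_def g_def)
    have t2: "\<bar>B + g\<bar> \<le> \<rho>"
    proof -
      have "\<bar>f (x1 + - ?h) - f x1 - grad x1 \<bullet> (- ?h)\<bar> \<le> L / 2 * (norm (- ?h))^2" by (rule taylor)
      moreover have "f (x1 + - ?h) - f x1 - grad x1 \<bullet> (- ?h) = B + g"
        unfolding B_def g_def inner_minus_right by simp
      moreover have "L / 2 * (norm (- ?h))^2 = \<rho>" using u r by (simp add: \<rho>_def)
      ultimately show ?thesis by simp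
    qed
    have z1e: "Z u (Suc 0) = (f (x1 + ?h) - f (x1 - ?h)) / 2" using ZS[of u 0] by (simp add: X1s)
    have "y1 = - (A + B) / 2"
      using z1e by (simp add: y1_def e_def X1s A_def B_def field_simps)
    moreover have "\<bar>A + B\<bar> \<le> \<bar>A - g\<bar> + \<bar>B + g\<bar>" by (rule order_trans[OF _ abs_triangle_ineq]) simp
    ultimately show ?thesis using t1 t2 by simp
  qed
  have seq: "(\<Sum>k=1..T. (Z u k)^2) \<le> 25/8 * (\<Sum>k=1..T. (MM u k)^2)
      + 50/9 * real T * (2 * \<rho> / (1 - \<bar>1 - \<beta>\<bar>))^2
      + 2 / (1 - \<bar>1 - \<beta>\<bar>)^2 * (\<Sum>k=2..T. (D k)^2)"
  proof (rule seq_Z[where z="Z u" and m="mm u" and R=R and D=D and S="SS u" and Mk="MM u", OF \<beta> refl \<rho>0 _ y1b _ Rb])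
    show "Z u 1 = mm u 1 + R 1 + y1" by (simp add: R_def y1_def)
    fix k :: nat assume k: "k \<ge> 1"
    then show "Z u (Suc k) = (1 - \<beta>) * Z u k + (mm u (Suc k) + R (Suc k)) - (mm u k + R k) + D (Suc k)"
      by (simp add: ZS R_def e_def D_def)
  qed (simp_all add: SSS MM_def)
  have Db: "(\<Sum>k=2..T. (D k)^2) \<le> G^2 * (\<Sum>k=1..T. (norm (P u k))^2)"
  proof -
    have "(\<Sum>k=2..T. (D k)^2) \<le> (\<Sum>k=2..T. G^2 * (norm (P u (k - 1)))^2)"
    proof (rule sum_mono)
      fix k assume "k \<in> {2..T}"
      then obtain j where j: "k = Suc j" by (cases k) auto
      have "\<bar>D k\<bar> \<le> G * norm (X u (Suc j) - X u j)" using lip j by (simp add: D_def)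
      also have "\<dots> = G * norm (P u j)" by (simp add: XS)
      finally have "\<bar>D k\<bar> \<le> G * norm (P u j)" .
      then have "(D k)^2 \<le> (G * norm (P u j))^2"
        by (metis abs_ge_zero order_trans power2_abs power_mono)
      then show "(D k)^2 \<le> G^2 * (norm (P u (k - 1)))^2" using j by (simp add: power_mult_distrib)
    qed
    also have "\<dots> \<le> G^2 * (\<Sum>k=1..T. (norm (P u k))^2)"
    proof (cases T)
      case (Suc n)
      have "(\<Sum>k=2..Suc n. G^2 * (norm (P u (k - 1)))^2) = (\<Sum>j=1..n. G^2 * (norm (P u j))^2)"
        using sum.atLeast_Suc_atMost_Suc_shift[of "\<lambda>k. G^2 * (norm (P u (k - 1)))^2" 1 n] by (simp add: numeral_2_eq_2)
      also have "\<dots> \<le> (\<Sum>j=1..Suc n. G^2 * (norm (P u j))^2)" by simp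
      finally have "(\<Sum>k=2..Suc n. G^2 * (norm (P u (k - 1)))^2) \<le> (\<Sum>j=1..Suc n. G^2 * (norm (P u j))^2)" .
      then show ?thesis unfolding Suc sum_distrib_left .
    qed simp
    finally show ?thesis .
  qed
  have bp: "0 < 1 - \<bar>1 - \<beta>\<bar>" using \<beta> by simp
  have "(\<Sum>k=1..T. (norm (Gk u k))^2) = (real DIM('a) / r)^2 * (\<Sum>k=1..T. (Z u k)^2)"
  proof -
    have "\<And>k. (norm (Gk u k))^2 = (real DIM('a) / r)^2 * (Z u k)^2"
      by (simp add: GkD u power_mult_distrib power_divide power2_abs)
    then show ?thesis by (simp add: sum_distrib_left)
  qed
  also have "\<dots> \<le> (real DIM('a) / r)^2 * (25/8 * (\<Sum>k=1..T. (MM u k)^2)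
      + 50/9 * real T * (2 * \<rho> / (1 - \<bar>1 - \<beta>\<bar>))^2
      + 2 / (1 - \<bar>1 - \<beta>\<bar>)^2 * (G^2 * (\<Sum>k=1..T. (norm (P u k))^2)))"
  proof (rule mult_left_mono)
    have "2 / (1 - \<bar>1 - \<beta>\<bar>)^2 * (\<Sum>k=2..T. (D k)^2) \<le> 2 / (1 - \<bar>1 - \<beta>\<bar>)^2 * (G^2 * (\<Sum>k=1..T. (norm (P u k))^2))"
      using Db by (intro mult_left_mono) auto
    then show "(\<Sum>k=1..T. (Z u k)^2) \<le> 25/8 * (\<Sum>k=1..T. (MM u k)^2)
      + 50/9 * real T * (2 * \<rho> / (1 - \<bar>1 - \<beta>\<bar>))^2
      + 2 / (1 - \<bar>1 - \<beta>\<bar>)^2 * (G^2 * (\<Sum>k=1..T. (norm (P u k))^2))" using seq by linarith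
  qed simp
  finally show ?thesis by (simp add: \<rho>_def)
qed

end


locale hlfp = hlfl f grad G L \<alpha> \<beta> \<eta> r x1
  for f :: "'a::euclidean_space \<Rightarrow> real" and grad G L \<alpha> \<beta> \<eta> r x1 +
  fixes M :: "'m measure" and V :: "nat \<Rightarrow> 'm \<Rightarrow> 'a"
  assumes PM: "prob_space M"
    and indV: "prob_space.indep_vars M (\<lambda>_. borel) V {1..}"
    and distV: "\<And>k. k \<ge> 1 \<Longrightarrow> distr M borel (V k) = uniform_sphere"
    and unitV: "\<And>i \<omega>. norm (V i \<omega>) = 1"
    and measV[measurable]: "\<And>i. V i \<in> borel_measurable M"
begin

lemma int_bnd:
  fixes h :: "'m \<Rightarrow> real" and B :: real
  assumes "h \<in> borel_measurable M" "\<And>\<omega>. \<bar>h \<omega>\<bar> \<le> B"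
  shows "integrable M h"
proof -
  interpret prob_space M by (rule PM)
  show ?thesis by (rule integrable_const_bound[where B=B]) (use assms in auto)
qed

lemma unit_vv: "\<forall>i. norm (V i \<omega>) = 1" using unitV by blast

lemma bS: "\<exists>B. \<forall>\<omega>. \<bar>SS (\<lambda>i. V i \<omega>) k\<bar> \<le> B"
proof -
  obtain B where "0 \<le> B" "\<And>u. (\<forall>i. norm (u i) = 1) \<Longrightarrow> \<bar>SS u k\<bar> \<le> B" using bnd_S[of k] by blast
  then show ?thesis using unit_vv by (intro exI[of _ B]) auto
qed
lemma bm: "\<exists>B. \<forall>\<omega>. \<bar>mm (\<lambda>i. V i \<omega>) k\<bar> \<le> B"
proof -
  obtain B where "0 \<le> B" "\<And>u. (\<forall>i. norm (u i) = 1) \<Longrightarrow> \<bar>mm u k\<bar> \<le> B" using bnd_m[of k] by blast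
  then show ?thesis using unit_vv by (intro exI[of _ B]) auto
qed
lemma bgr: "\<exists>B. \<forall>\<omega>. \<bar>norm (grad (X (\<lambda>i. V i \<omega>) k))\<bar> \<le> B"
proof -
  obtain B where "0 \<le> B" "\<And>u. (\<forall>i. norm (u i) = 1) \<Longrightarrow> norm (grad (X u k)) \<le> B" using bnd_grad[of k] by blast
  then show ?thesis using unit_vv by (intro exI[of _ B]) auto
qed
lemma bP: "\<exists>B. \<forall>\<omega>. \<bar>norm (P (\<lambda>i. V i \<omega>) k)\<bar> \<le> B"
proof -
  obtain B where "0 \<le> B" "\<And>u. (\<forall>i. norm (u i) = 1) \<Longrightarrow> norm (X u k) \<le> B \<and> \<bar>Z u k\<bar> \<le> B \<and> norm (P u k) \<le> B"
    using bnd_state[of k] by blast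
  then show ?thesis using unit_vv by (intro exI[of _ B]) auto
qed
lemma bZ: "\<exists>B. \<forall>\<omega>. \<bar>Z (\<lambda>i. V i \<omega>) k\<bar> \<le> B"
proof -
  obtain B where "0 \<le> B" "\<And>u. (\<forall>i. norm (u i) = 1) \<Longrightarrow> norm (X u k) \<le> B \<and> \<bar>Z u k\<bar> \<le> B \<and> norm (P u k) \<le> B"
    using bnd_state[of k] by blast
  then show ?thesis using unit_vv by (intro exI[of _ B]) auto
qed

lemma sq_bnd: "\<bar>x\<bar> \<le> B \<Longrightarrow> \<bar>x^2\<bar> \<le> B^2" for x B :: real
  by (metis abs_ge_zero abs_power2 order_trans power2_abs power_mono)

lemma int_sq:
  fixes h :: "'m \<Rightarrow> real"
  assumes "h \<in> borel_measurable M" "\<exists>B. \<forall>\<omega>. \<bar>h \<omega>\<bar> \<le> B"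
  shows "integrable M (\<lambda>\<omega>. (h \<omega>)^2)"
proof -
  obtain B where B: "\<And>\<omega>. \<bar>h \<omega>\<bar> \<le> B" using assms(2) by blast
  show ?thesis by (rule int_bnd[where B="B^2"]) (use assms(1) sq_bnd[OF B] in auto)
qed

lemma int_S2: "integrable M (\<lambda>\<omega>. (SS (\<lambda>i. V i \<omega>) k)^2)"
  by (rule int_sq[OF _ bS]) simp
lemma int_m2: "integrable M (\<lambda>\<omega>. (mm (\<lambda>i. V i \<omega>) k)^2)"
  by (rule int_sq[OF _ bm]) simp
lemma int_gr2: "integrable M (\<lambda>\<omega>. (norm (grad (X (\<lambda>i. V i \<omega>) k)))^2)"
  by (rule int_sq[OF _ bgr]) simp
lemma int_P2: "integrable M (\<lambda>\<omega>. (norm (P (\<lambda>i. V i \<omega>) k))^2)"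
  by (rule int_sq[OF _ bP]) simp
lemma int_mS: "integrable M (\<lambda>\<omega>. mm (\<lambda>i. V i \<omega>) k * SS (\<lambda>i. V i \<omega>) j)"
proof -
  obtain B1 where B1: "\<And>\<omega>. \<bar>mm (\<lambda>i. V i \<omega>) k\<bar> \<le> B1" using bm by blast
  obtain B2 where B2: "\<And>\<omega>. \<bar>SS (\<lambda>i. V i \<omega>) j\<bar> \<le> B2" using bS by blast
  have "\<bar>mm (\<lambda>i. V i \<omega>) k * SS (\<lambda>i. V i \<omega>) j\<bar> \<le> B1 * B2" for \<omega>
    unfolding abs_mult by (rule mult_mono[OF B1 B2]) (use order_trans[OF abs_ge_zero B1] in auto)
  then show ?thesis by (intro int_bnd[where B="B1 * B2"]) auto
qed
lemma int_M2: "integrable M (\<lambda>\<omega>. (MM (\<lambda>i. V i \<omega>) k)^2)"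
proof (rule int_sq)
  obtain B1 where B1: "\<And>\<omega>. \<bar>mm (\<lambda>i. V i \<omega>) k\<bar> \<le> B1" using bm by blast
  obtain B2 where B2: "\<And>\<omega>. \<bar>SS (\<lambda>i. V i \<omega>) (k - 1)\<bar> \<le> B2" using bS by blast
  have "\<bar>MM (\<lambda>i. V i \<omega>) k\<bar> \<le> B1 + \<beta> * B2" for \<omega>
  proof -
    have "\<bar>MM (\<lambda>i. V i \<omega>) k\<bar> \<le> \<bar>mm (\<lambda>i. V i \<omega>) k\<bar> + \<bar>\<beta> * SS (\<lambda>i. V i \<omega>) (k - 1)\<bar>"
      unfolding MM_def by (rule abs_triangle_ineq4)
    also have "\<bar>\<beta> * SS (\<lambda>i. V i \<omega>) (k - 1)\<bar> \<le> \<beta> * B2"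
      using B2[of \<omega>] \<beta> by (simp add: abs_mult mult_left_mono)
    finally show ?thesis using B1[of \<omega>] by simp
  qed
  then show "\<exists>B. \<forall>\<omega>. \<bar>MM (\<lambda>i. V i \<omega>) k\<bar> \<le> B" by blast
qed simp
lemma int_G2: "integrable M (\<lambda>\<omega>. (norm (Gk (\<lambda>i. V i \<omega>) k))^2)"
proof (rule int_sq)
  obtain B where B: "\<And>\<omega>. \<bar>Z (\<lambda>i. V i \<omega>) k\<bar> \<le> B" using bZ by blast
  have "\<bar>norm (Gk (\<lambda>i. V i \<omega>) k)\<bar> \<le> real DIM('a) / r * B" for \<omega>
  proof -
    have "\<bar>norm (Gk (\<lambda>i. V i \<omega>) k)\<bar> = real DIM('a) / r * \<bar>Z (\<lambda>i. V i \<omega>) k\<bar>"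
      using r by (simp add: GkD unitV abs_mult)
    also have "\<dots> \<le> real DIM('a) / r * B" using B[of \<omega>] r by (intro mult_left_mono) auto
    finally show ?thesis .
  qed
  then show "\<exists>B. \<forall>\<omega>. \<bar>norm (Gk (\<lambda>i. V i \<omega>) k)\<bar> \<le> B" by blast
qed simp

lemma X_loc: "1 \<le> k \<Longrightarrow> (\<And>i. 1 \<le> i \<Longrightarrow> i < k \<Longrightarrow> u i = v i) \<Longrightarrow> X u k = X v k"
proof -
  assume k: "1 \<le> k" and uv: "\<And>i. 1 \<le> i \<Longrightarrow> i < k \<Longrightarrow> u i = v i"
  obtain j where j: "k = Suc j" using k by (cases k) auto
  have "X u j = X v j" "P u j = P v j" using uv j by (intro loc_all; auto)+
  then show ?thesis by (simp add: j XS)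
qed

lemma E_mS: assumes k: "1 \<le> k"
  shows "(\<integral>\<omega>. mm (\<lambda>i. V i \<omega>) k * SS (\<lambda>i. V i \<omega>) (k - 1) \<partial>M) = 0"
proof -
  obtain B1 where B10: "0 \<le> B1" and B1: "\<And>u. (\<forall>i. norm (u i) = 1) \<Longrightarrow> \<bar>SS u (k - 1)\<bar> \<le> B1"
    using bnd_S[of "k - 1"] by blast
  obtain B2 where B20: "0 \<le> B2" and B2: "\<And>u. (\<forall>i. norm (u i) = 1) \<Longrightarrow> norm (grad (X u k)) \<le> B2"
    using bnd_grad[of k] by blast
  have "(\<integral>\<omega>. SS (\<lambda>i. V i \<omega>) (k - 1) * ((r *\<^sub>R grad (X (\<lambda>i. V i \<omega>) k)) \<bullet> V k \<omega>) \<partial>M) = 0"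
  proof (rule key_mean[OF PM indV distV[OF k] k unitV, where B="max B1 (r * B2)"])
    show "SS u (k - 1) = SS v (k - 1)" if "\<And>i. 1 \<le> i \<Longrightarrow> i < k \<Longrightarrow> u i = v i" for u v
      using that by (intro loc_all) auto
    show "r *\<^sub>R grad (X u k) = r *\<^sub>R grad (X v k)" if "\<And>i. 1 \<le> i \<Longrightarrow> i < k \<Longrightarrow> u i = v i" for u v
      using X_loc[OF k that] by simp
    show "(\<lambda>y. SS (Ek k y) (k - 1)) \<in> borel_measurable (PiM {1..<k} (\<lambda>_. borel))"
      by (rule meas_S[OF Ek_meas])
    show "(\<lambda>y. r *\<^sub>R grad (X (Ek k y) k)) \<in> borel_measurable (PiM {1..<k} (\<lambda>_. borel))"
      by (rule borel_measurable_scaleR[OF measurable_const measurable_compose[OF meas_X[OF Ek_meas] grad_meas]]) simp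
    show "\<bar>SS u (k - 1)\<bar> \<le> max B1 (r * B2)" if "\<And>i. norm (u i) = 1" for u
      using B1[of u] that by (simp add: le_max_iff_disj)
    show "norm (r *\<^sub>R grad (X u k)) \<le> max B1 (r * B2)" if "\<And>i. norm (u i) = 1" for u
      using B2[of u] that r by (simp add: le_max_iff_disj mult_left_mono)
  qed
  moreover have "(\<lambda>\<omega>. SS (\<lambda>i. V i \<omega>) (k - 1) * ((r *\<^sub>R grad (X (\<lambda>i. V i \<omega>) k)) \<bullet> V k \<omega>)) = (\<lambda>\<omega>. mm (\<lambda>i. V i \<omega>) k * SS (\<lambda>i. V i \<omega>) (k - 1))"
    using k by (auto simp: mm_def fun_eq_iff)
  ultimately show ?thesis by metis
qed

lemma E_m2: assumes k: "1 \<le> k"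
  shows "(\<integral>\<omega>. (mm (\<lambda>i. V i \<omega>) k)^2 \<partial>M) = r^2 / real DIM('a) * (\<integral>\<omega>. (norm (grad (X (\<lambda>i. V i \<omega>) k)))^2 \<partial>M)"
proof -
  obtain B2 where B20: "0 \<le> B2" and B2: "\<And>u. (\<forall>i. norm (u i) = 1) \<Longrightarrow> norm (grad (X u k)) \<le> B2"
    using bnd_grad[of k] by blast
  have "(\<integral>\<omega>. (grad (X (\<lambda>i. V i \<omega>) k) \<bullet> V k \<omega>)^2 \<partial>M) = (\<integral>\<omega>. (norm (grad (X (\<lambda>i. V i \<omega>) k)))^2 \<partial>M) / real DIM('a)"
  proof (rule key_sq[OF PM indV distV[OF k] k unitV, where B=B2 and \<Psi>="\<lambda>_. 0"])
    show "grad (X u k) = grad (X v k)" if "\<And>i. 1 \<le> i \<Longrightarrow> i < k \<Longrightarrow> u i = v i" for u v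
      using X_loc[OF k that] by simp
    show "(\<lambda>y. grad (X (Ek k y) k)) \<in> borel_measurable (PiM {1..<k} (\<lambda>_. borel))"
      by (rule measurable_compose[OF meas_X[OF Ek_meas] grad_meas])
    show "norm (grad (X u k)) \<le> B2" if "\<And>i. norm (u i) = 1" for u using B2[of u] that by simp
  qed (use B20 in auto)
  moreover have "\<And>\<omega>. (mm (\<lambda>i. V i \<omega>) k)^2 = r^2 * (grad (X (\<lambda>i. V i \<omega>) k) \<bullet> V k \<omega>)^2"
    using k by (simp add: mm_def power_mult_distrib)
  ultimately show ?thesis by simp
qed

end


lemma final_arith:
  fixes Eg Ep Egr EM d r G L \<eta> \<alpha> \<beta> T bp \<theta> :: real
  assumes d: "d > 0" and r: "r > 0" and bp: "bp = 1 - \<bar>1 - \<beta>\<bar>" and \<beta>: "0 < \<beta>" "\<beta> < 2"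
    and \<alpha>: "0 \<le> \<alpha>" "\<alpha> < 1"
    and \<theta>: "\<theta> = 1 - 4 * \<eta>^2 * d^2 * G^2 * (1 + \<alpha>^2) / (bp^2 * r^2 * (1 - \<alpha>^2)^2)" "\<theta> > 0"
    and h1: "Ep \<le> 2 * \<eta>^2 * (1 + \<alpha>^2) / (1 - \<alpha>^2)^2 * Eg"
    and h2: "Eg \<le> (d / r)^2 * (25/8 * EM + 50/9 * T * (2 * (L * r^2 / 2) / bp)^2 + 2 / bp^2 * (G^2 * Ep))"
    and h3: "EM \<le> 2 / (2 - \<beta>) * (r^2 / d * Egr)" and Egr: "Egr \<ge> 0" and T: "T \<ge> 0"
  shows "Eg \<le> 25 * d / (4 * \<theta> * bp^2) * Egr + 10 * T * r^2 * L^2 * d^2 / (\<theta> * bp^2)"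
proof -
  have bp0: "0 < bp" "bp \<le> 1" "bp \<le> 2 - \<beta>" using \<beta> bp by auto
  have a1: "0 < 1 - \<alpha>^2" using \<alpha> by (simp add: power2_eq_square) (smt (verit) mult_left_le_one_le)
  define K where "K = (d / r)^2 * (2 / bp^2) * G^2"
  define cp where "cp = 2 * \<eta>^2 * (1 + \<alpha>^2) / (1 - \<alpha>^2)^2"
  have K0: "0 \<le> K" unfolding K_def by simp
  have Kcp: "K * cp = 1 - \<theta>"
    unfolding K_def cp_def \<theta>(1) using d r bp0 a1 by (simp add: field_simps power2_eq_square)
  define A where "A = (d / r)^2 * (25/8 * EM)"
  define C where "C = (d / r)^2 * (50/9 * T * (2 * (L * r^2 / 2) / bp)^2)"
  have "Eg \<le> A + C + K * Ep" using h2 unfolding A_def C_def K_def by (simp add: algebra_simps)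
  also have "K * Ep \<le> K * (cp * Eg)" using h1 K0 unfolding cp_def by (intro mult_left_mono) auto
  finally have "Eg \<le> A + C + (1 - \<theta>) * Eg" using Kcp by (simp add: mult.assoc[symmetric])
  then have th: "\<theta> * Eg \<le> A + C" by (simp add: algebra_simps)
  have A: "A \<le> 25 * d / (4 * bp^2) * Egr"
  proof -
    have "A \<le> (d / r)^2 * (25/8 * (2 / (2 - \<beta>) * (r^2 / d * Egr)))"
      unfolding A_def using h3 by (intro mult_left_mono) auto
    also have "\<dots> = 25 * d / (4 * (2 - \<beta>)) * Egr" using d r \<beta> by (simp add: field_simps power2_eq_square)
    also have "\<dots> \<le> 25 * d / (4 * bp^2) * Egr"
    proof (rule mult_right_mono[OF _ Egr])
      have "bp^2 \<le> 2 - \<beta>" using bp0 by (smt (verit) mult_left_le_one_le power2_eq_square)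
      then show "25 * d / (4 * (2 - \<beta>)) \<le> 25 * d / (4 * bp^2)"
        using d bp0 \<beta> by (intro divide_left_mono) auto
    qed
    finally show ?thesis .
  qed
  have C: "C \<le> 10 * T * r^2 * L^2 * d^2 / bp^2"
  proof -
    have "C = 50/9 * T * r^2 * L^2 * d^2 / bp^2" unfolding C_def using r bp0
      by (simp add: field_simps power2_eq_square)
    also have "\<dots> \<le> 10 * T * r^2 * L^2 * d^2 / bp^2" using T bp0
      by (intro divide_right_mono mult_right_mono) auto
    finally show ?thesis .
  qed
  have "\<theta> * Eg \<le> 25 * d / (4 * bp^2) * Egr + 10 * T * r^2 * L^2 * d^2 / bp^2" using th A C by linarith
  then have "Eg \<le> (25 * d / (4 * bp^2) * Egr + 10 * T * r^2 * L^2 * d^2 / bp^2) / \<theta>"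
    using \<theta>(2) by (simp add: field_simps)
  also have "\<dots> = 25 * d / (4 * \<theta> * bp^2) * Egr + 10 * T * r^2 * L^2 * d^2 / (\<theta> * bp^2)"
    using \<theta>(2) by (simp add: field_simps)
  finally show ?thesis .
qed


context hlfp begin

lemma E_M: assumes k: "1 \<le> k"
  shows "(\<integral>\<omega>. (MM (\<lambda>i. V i \<omega>) k)^2 \<partial>M) = (\<integral>\<omega>. (mm (\<lambda>i. V i \<omega>) k)^2 \<partial>M) + \<beta>^2 * (\<integral>\<omega>. (SS (\<lambda>i. V i \<omega>) (k - 1))^2 \<partial>M)"
proof -
  have e: "(\<lambda>\<omega>. (MM (\<lambda>i. V i \<omega>) k)^2) = (\<lambda>\<omega>. (mm (\<lambda>i. V i \<omega>) k)^2 + (\<beta>^2 * (SS (\<lambda>i. V i \<omega>) (k - 1))^2 - (2 * \<beta>) * (mm (\<lambda>i. V i \<omega>) k * SS (\<lambda>i. V i \<omega>) (k - 1))))"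
    by (auto simp: MM_def power2_eq_square algebra_simps fun_eq_iff)
  have z: "(\<integral>\<omega>. mm (\<lambda>i. V i \<omega>) k * SS (\<lambda>i. V i \<omega>) (k - Suc 0) \<partial>M) = 0"
    using E_mS[OF k] by simp
  show ?thesis unfolding e
    by (simp add: Bochner_Integration.integral_add Bochner_Integration.integral_diff int_m2 int_S2 int_mS z)
qed

lemma E_S: "(\<integral>\<omega>. (SS (\<lambda>i. V i \<omega>) (Suc j))^2 \<partial>M) = (1 - \<beta>)^2 * (\<integral>\<omega>. (SS (\<lambda>i. V i \<omega>) j)^2 \<partial>M) + (\<integral>\<omega>. (mm (\<lambda>i. V i \<omega>) (Suc j))^2 \<partial>M)"
proof -
  have e: "(\<lambda>\<omega>. (SS (\<lambda>i. V i \<omega>) (Suc j))^2) = (\<lambda>\<omega>. (1 - \<beta>)^2 * (SS (\<lambda>i. V i \<omega>) j)^2 + ((2 * (1 - \<beta>)) * (mm (\<lambda>i. V i \<omega>) (Suc j) * SS (\<lambda>i. V i \<omega>) j) + (mm (\<lambda>i. V i \<omega>) (Suc j))^2))"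
    by (auto simp: SSS power2_eq_square algebra_simps fun_eq_iff)
  have z: "(\<integral>\<omega>. mm (\<lambda>i. V i \<omega>) (Suc j) * SS (\<lambda>i. V i \<omega>) j \<partial>M) = 0"
    using E_mS[of "Suc j"] by simp
  show ?thesis unfolding e
    by (simp add: Bochner_Integration.integral_add int_m2 int_S2 int_mS z)
qed

lemma E_Msum: "(\<Sum>k=1..T. (\<integral>\<omega>. (MM (\<lambda>i. V i \<omega>) k)^2 \<partial>M)) \<le> 2 / (2 - \<beta>) * (\<Sum>k=1..T. (\<integral>\<omega>. (mm (\<lambda>i. V i \<omega>) k)^2 \<partial>M))"
proof -
  define sg where "sg k = (\<integral>\<omega>. (SS (\<lambda>i. V i \<omega>) k)^2 \<partial>M)" for k
  define mu where "mu k = (\<integral>\<omega>. (mm (\<lambda>i. V i \<omega>) k)^2 \<partial>M)" for k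
  have "(\<Sum>k=1..T. (mu k + \<beta>^2 * sg (k - 1))) \<le> (1 + \<beta>^2 / (1 - (1 - \<beta>)^2)) * (\<Sum>k=1..T. mu k)"
  proof (rule seq_S)
    show "(1 - \<beta>)^2 < 1" using \<beta> by (simp add: abs_square_less_1)
    show "sg 0 = 0" by (simp add: sg_def)
    show "\<And>k. 0 \<le> sg k" unfolding sg_def by (intro integral_nonneg_AE) auto
    show "\<And>k. sg (Suc k) = (1 - \<beta>)^2 * sg k + mu (Suc k)" by (simp add: sg_def mu_def E_S)
  qed
  moreover have "(\<Sum>k=1..T. (mu k + \<beta>^2 * sg (k - 1))) = (\<Sum>k=1..T. (\<integral>\<omega>. (MM (\<lambda>i. V i \<omega>) k)^2 \<partial>M))"
    by (intro sum.cong refl) (simp add: mu_def sg_def E_M)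
  moreover have "1 + \<beta>^2 / (1 - (1 - \<beta>)^2) = 2 / (2 - \<beta>)"
    using \<beta> by (simp add: field_simps power2_eq_square)
  ultimately show ?thesis by (simp add: mu_def)
qed

lemma I1: "(\<Sum>k=1..T. (\<integral>\<omega>. (norm (P (\<lambda>i. V i \<omega>) k))^2 \<partial>M))
   \<le> 2 * \<eta>^2 * (1 + \<alpha>^2) / (1 - \<alpha>^2)^2 * (\<Sum>k=1..T. (\<integral>\<omega>. (norm (Gk (\<lambda>i. V i \<omega>) k))^2 \<partial>M))"
proof -
  have "(\<Sum>k=1..T. (\<integral>\<omega>. (norm (P (\<lambda>i. V i \<omega>) k))^2 \<partial>M)) = (\<integral>\<omega>. (\<Sum>k=1..T. (norm (P (\<lambda>i. V i \<omega>) k))^2) \<partial>M)"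
    by (rule Bochner_Integration.integral_sum[symmetric]) (rule int_P2)
  also have "\<dots> \<le> (\<integral>\<omega>. 2 * \<eta>^2 * (1 + \<alpha>^2) / (1 - \<alpha>^2)^2 * (\<Sum>k=1..T. (norm (Gk (\<lambda>i. V i \<omega>) k))^2) \<partial>M)"
    by (intro integral_mono PW2 Bochner_Integration.integrable_sum int_P2 integrable_mult_right int_G2)
  also have "\<dots> = 2 * \<eta>^2 * (1 + \<alpha>^2) / (1 - \<alpha>^2)^2 * (\<Sum>k=1..T. (\<integral>\<omega>. (norm (Gk (\<lambda>i. V i \<omega>) k))^2 \<partial>M))"
    by (simp add: Bochner_Integration.integral_sum int_G2)
  finally show ?thesis .
qed

lemma I2: "(\<Sum>k=1..T. (\<integral>\<omega>. (norm (Gk (\<lambda>i. V i \<omega>) k))^2 \<partial>M))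
   \<le> (real DIM('a) / r)^2 * (25/8 * (\<Sum>k=1..T. (\<integral>\<omega>. (MM (\<lambda>i. V i \<omega>) k)^2 \<partial>M))
      + 50/9 * real T * (2 * (L * r^2 / 2) / (1 - \<bar>1 - \<beta>\<bar>))^2
      + 2 / (1 - \<bar>1 - \<beta>\<bar>)^2 * (G^2 * (\<Sum>k=1..T. (\<integral>\<omega>. (norm (P (\<lambda>i. V i \<omega>) k))^2 \<partial>M))))"
proof -
  interpret prob_space M by (rule PM)
  define c1 where "c1 = (real DIM('a) / r)^2"
  define C where "C = 50/9 * real T * (2 * (L * r^2 / 2) / (1 - \<bar>1 - \<beta>\<bar>))^2"
  define c2 where "c2 = 2 / (1 - \<bar>1 - \<beta>\<bar>)^2 * G^2"
  have "(\<Sum>k=1..T. (\<integral>\<omega>. (norm (Gk (\<lambda>i. V i \<omega>) k))^2 \<partial>M)) = (\<integral>\<omega>. (\<Sum>k=1..T. (norm (Gk (\<lambda>i. V i \<omega>) k))^2) \<partial>M)"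
    by (rule Bochner_Integration.integral_sum[symmetric]) (rule int_G2)
  also have "\<dots> \<le> (\<integral>\<omega>. c1 * (25/8) * (\<Sum>k=1..T. (MM (\<lambda>i. V i \<omega>) k)^2) + (c1 * C + c1 * c2 * (\<Sum>k=1..T. (norm (P (\<lambda>i. V i \<omega>) k))^2)) \<partial>M)"
  proof (rule integral_mono)
    show "integrable M (\<lambda>\<omega>. \<Sum>k=1..T. (norm (Gk (\<lambda>i. V i \<omega>) k))^2)"
      by (intro Bochner_Integration.integrable_sum int_G2)
    show "integrable M (\<lambda>\<omega>. c1 * (25/8) * (\<Sum>k=1..T. (MM (\<lambda>i. V i \<omega>) k)^2) + (c1 * C + c1 * c2 * (\<Sum>k=1..T. (norm (P (\<lambda>i. V i \<omega>) k))^2)))"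
      by (intro Bochner_Integration.integrable_add integrable_mult_right Bochner_Integration.integrable_sum int_M2 int_P2 integrable_const)
    fix \<omega>
    have "(\<Sum>k=1..T. (norm (Gk (\<lambda>i. V i \<omega>) k))^2) \<le> c1 * (25/8 * (\<Sum>k=1..T. (MM (\<lambda>i. V i \<omega>) k)^2) + C + 2 / (1 - \<bar>1 - \<beta>\<bar>)^2 * (G^2 * (\<Sum>k=1..T. (norm (P (\<lambda>i. V i \<omega>) k))^2)))"
      unfolding c1_def C_def by (rule PW1) (rule unitV)
    then show "(\<Sum>k=1..T. (norm (Gk (\<lambda>i. V i \<omega>) k))^2) \<le> c1 * (25/8) * (\<Sum>k=1..T. (MM (\<lambda>i. V i \<omega>) k)^2) + (c1 * C + c1 * c2 * (\<Sum>k=1..T. (norm (P (\<lambda>i. V i \<omega>) k))^2))"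
      by (simp add: c2_def algebra_simps)
  qed
  also have "\<dots> = c1 * (25/8) * (\<Sum>k=1..T. (\<integral>\<omega>. (MM (\<lambda>i. V i \<omega>) k)^2 \<partial>M)) + (c1 * C + c1 * c2 * (\<Sum>k=1..T. (\<integral>\<omega>. (norm (P (\<lambda>i. V i \<omega>) k))^2 \<partial>M)))"
    using PM
    by (simp add: Bochner_Integration.integral_add Bochner_Integration.integral_sum int_M2 int_P2
        Bochner_Integration.integrable_sum prob_space.prob_space)
  also have "\<dots> = c1 * (25/8 * (\<Sum>k=1..T. (\<integral>\<omega>. (MM (\<lambda>i. V i \<omega>) k)^2 \<partial>M)) + C + 2 / (1 - \<bar>1 - \<beta>\<bar>)^2 * (G^2 * (\<Sum>k=1..T. (\<integral>\<omega>. (norm (P (\<lambda>i. V i \<omega>) k))^2 \<partial>M))))"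
    by (simp add: c2_def algebra_simps)
  finally show ?thesis unfolding c1_def C_def .
qed

lemma main_V:
  assumes \<theta>: "1 - 4 * \<eta>^2 * real DIM('a)^2 * G^2 * (1 + \<alpha>^2) / ((1 - \<bar>1 - \<beta>\<bar>)^2 * r^2 * (1 - \<alpha>^2)^2) > 0"
  shows "(\<Sum>k=1..T. (\<integral>\<omega>. (norm (Gk (\<lambda>i. V i \<omega>) k))^2 \<partial>M))
      \<le> 25 * real DIM('a) / (4 * (1 - 4 * \<eta>^2 * real DIM('a)^2 * G^2 * (1 + \<alpha>^2) / ((1 - \<bar>1 - \<beta>\<bar>)^2 * r^2 * (1 - \<alpha>^2)^2)) * (1 - \<bar>1 - \<beta>\<bar>)^2)
          * (\<Sum>k=1..T. (\<integral>\<omega>. (norm (grad (X (\<lambda>i. V i \<omega>) k)))^2 \<partial>M))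
        + 10 * real T * r^2 * L^2 * real DIM('a)^2 / ((1 - 4 * \<eta>^2 * real DIM('a)^2 * G^2 * (1 + \<alpha>^2) / ((1 - \<bar>1 - \<beta>\<bar>)^2 * r^2 * (1 - \<alpha>^2)^2)) * (1 - \<bar>1 - \<beta>\<bar>)^2)"
proof (rule final_arith[OF _ r refl \<beta> \<alpha> refl \<theta> I1 I2])
  show "0 < real DIM('a)" by simp
  show "0 \<le> (\<Sum>k=1..T. (\<integral>\<omega>. (norm (grad (X (\<lambda>i. V i \<omega>) k)))^2 \<partial>M))"
    by (intro sum_nonneg integral_nonneg_AE) auto
  show "0 \<le> real T" by simp
  have "(\<Sum>k=1..T. (\<integral>\<omega>. (MM (\<lambda>i. V i \<omega>) k)^2 \<partial>M)) \<le> 2 / (2 - \<beta>) * (\<Sum>k=1..T. (\<integral>\<omega>. (mm (\<lambda>i. V i \<omega>) k)^2 \<partial>M))"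
    by (rule E_Msum)
  also have "(\<Sum>k=1..T. (\<integral>\<omega>. (mm (\<lambda>i. V i \<omega>) k)^2 \<partial>M)) = r^2 / real DIM('a) * (\<Sum>k=1..T. (\<integral>\<omega>. (norm (grad (X (\<lambda>i. V i \<omega>) k)))^2 \<partial>M))"
    by (simp add: E_m2 sum_distrib_left)
  finally show "(\<Sum>k=1..T. (\<integral>\<omega>. (MM (\<lambda>i. V i \<omega>) k)^2 \<partial>M)) \<le> 2 / (2 - \<beta>) * (r^2 / real DIM('a) * (\<Sum>k=1..T. (\<integral>\<omega>. (norm (grad (X (\<lambda>i. V i \<omega>) k)))^2 \<partial>M)))" .
qed

end


theorem lemma3:
  fixes f :: "'a::euclidean_space \<Rightarrow> real" and grad :: "'a \<Rightarrow> 'a"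
    and M :: "'m measure" and U :: "nat \<Rightarrow> 'm \<Rightarrow> 'a"
    and G L \<alpha> \<beta> \<eta> r :: real and x1 :: 'a and T :: nat
  assumes lip: "\<And>x y. \<bar>f x - f y\<bar> \<le> G * norm (x - y)"
    and deriv: "\<And>x. (f has_derivative (\<lambda>h. grad x \<bullet> h)) (at x)"
    and smooth: "\<And>x y. norm (grad x - grad y) \<le> L * norm (x - y)"
    and "prob_space M"
    and indep: "prob_space.indep_vars M (\<lambda>_. borel) U {1..}"
    and unif: "\<And>k. k \<ge> 1 \<Longrightarrow> distr M borel (U k) = uniform_sphere"
    and \<alpha>: "0 \<le> \<alpha>" "\<alpha> < 1" and \<beta>: "0 < \<beta>" "\<beta> < 2" and \<eta>: "\<eta> > 0" and r: "r > 0"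
    and \<theta>: "1 - 4 * \<eta>^2 * real DIM('a)^2 * G^2 * (1 + \<alpha>^2)
              / ((1 - \<bar>1 - \<beta>\<bar>)^2 * r^2 * (1 - \<alpha>^2)^2) > 0"
    and T: "T \<ge> 1"
  shows "let d = real DIM('a); \<beta>' = 1 - \<bar>1 - \<beta>\<bar>;
             \<theta> = 1 - 4 * \<eta>^2 * d^2 * G^2 * (1 + \<alpha>^2) / (\<beta>'^2 * r^2 * (1 - \<alpha>^2)^2);
             Eg = (\<Sum>k=1..T. integral\<^sup>L M (\<lambda>\<omega>. norm (hlf_g f \<alpha> \<beta> \<eta> r x1 (\<lambda>j. U j \<omega>) k)^2));
             Ep = (\<Sum>k=1..T. integral\<^sup>L M (\<lambda>\<omega>. norm (hlf_p f \<alpha> \<beta> \<eta> r x1 (\<lambda>j. U j \<omega>) k)^2));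
             Egrad = (\<Sum>k=1..T. integral\<^sup>L M (\<lambda>\<omega>. norm (grad (hlf_x f \<alpha> \<beta> \<eta> r x1 (\<lambda>j. U j \<omega>) k))^2))
         in Eg \<le> 25 * d / (4 * \<theta> * \<beta>'^2) * Egrad + 10 * real T * r^2 * L^2 * d^2 / (\<theta> * \<beta>'^2)
            \<and> Ep \<le> 2 * \<eta>^2 * (1 + \<alpha>^2) / (1 - \<alpha>^2)^2 * Eg"
proof -
  interpret prob_space M by fact
  interpret H: hlfl f grad G L \<alpha> \<beta> \<eta> r x1
    by unfold_locales (use lip deriv smooth \<alpha> \<beta> \<eta> r in auto)
  have Um: "U i \<in> borel_measurable M" if "i \<ge> 1" for i
    using indep that unfolding indep_vars_def by auto
  define V where "V i \<omega> = (if i = 0 then nz 0 else nz (U i \<omega>))" for i \<omega>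
  define U' where "U' i \<omega> = (if i = 0 then 0 else U i \<omega>)" for i \<omega>
  have Vm: "V i \<in> borel_measurable M" for i
  proof (cases "i = 0")
    case False
    then have "V i = (\<lambda>\<omega>. nz (U i \<omega>))" by (simp add: V_def fun_eq_iff)
    then show ?thesis using Um[of i] False by simp
  next
    case True
    then have "V i = (\<lambda>\<omega>. nz 0)" by (simp add: V_def fun_eq_iff)
    then show ?thesis by simp
  qed
  have U'm: "U' i \<in> borel_measurable M" for i
  proof (cases "i = 0")
    case False
    then have "U' i = U i" by (simp add: U'_def fun_eq_iff)
    then show ?thesis using Um[of i] False by simp
  next
    case True
    then have "U' i = (\<lambda>\<omega>. 0)" by (simp add: U'_def fun_eq_iff)
    then show ?thesis by simp
  qed
  have indV: "indep_vars (\<lambda>_. borel) V {1..}"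
  proof -
    have "indep_vars (\<lambda>_. borel) (\<lambda>i \<omega>. nz (U i \<omega>)) {1..}"
      by (rule indep_vars_compose2[OF indep]) simp
    moreover have "indep_vars (\<lambda>_. borel) (\<lambda>i \<omega>. nz (U i \<omega>)) {1..} = indep_vars (\<lambda>_. borel) V {1..}"
      by (rule indep_vars_cong) (auto simp: V_def fun_eq_iff)
    ultimately show ?thesis by simp
  qed
  have AEU: "AE \<omega> in M. norm (U k \<omega>) = 1" if k: "k \<ge> 1" for k
  proof -
    have "AE u in distr M borel (U k). norm u = 1" unfolding unif[OF k] by (rule AE_sphere)
    then show ?thesis using Um[OF k] by (subst (asm) AE_distr_iff) auto
  qed
  have distV: "distr M borel (V k) = uniform_sphere" if k: "k \<ge> 1" for k
  proof -
    have Vk: "V k = (\<lambda>\<omega>. nz (U k \<omega>))" using k by (simp add: V_def fun_eq_iff)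
    have "distr M borel (\<lambda>\<omega>. nz (U k \<omega>)) = distr (distr M borel (U k)) borel nz"
      using Um[OF k] by (subst distr_distr) (auto simp: comp_def)
    also have "\<dots> = distr uniform_sphere borel nz" by (simp add: unif[OF k])
    also have "\<dots> = distr uniform_sphere borel (\<lambda>u. u)"
    proof (rule distr_cong_AE)
      show "AE x in uniform_sphere. nz x = (x :: 'a)"
        using AE_sphere[where 'a='a] by eventually_elim (simp add: nz_id)
    qed simp_all
    also have "\<dots> = uniform_sphere" by (rule distr_id2) simp
    finally show ?thesis by (simp add: Vk)
  qed
  interpret HP: hlfp f grad G L \<alpha> \<beta> \<eta> r x1 M V
    by unfold_locales (use indV distV Vm \<open>prob_space M\<close> in \<open>auto simp: V_def\<close>)
  have AEall: "AE \<omega> in M. \<forall>i\<in>{1..T}. U' i \<omega> = V i \<omega>"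
  proof (rule AE_finite_allI)
    fix i assume i: "i \<in> {1..T}"
    have i1: "i \<ge> 1" using i by simp
    show "AE \<omega> in M. U' i \<omega> = V i \<omega>" using AEU[OF i1] by eventually_elim (use i1 in \<open>auto simp: U'_def V_def nz_id\<close>)
  qed simp
  have eqU: "\<And>k \<omega>. hlf_g f \<alpha> \<beta> \<eta> r x1 (\<lambda>j. U j \<omega>) k = H.Gk (\<lambda>j. U' j \<omega>) k"
       "\<And>k \<omega>. hlf_p f \<alpha> \<beta> \<eta> r x1 (\<lambda>j. U j \<omega>) k = H.P (\<lambda>j. U' j \<omega>) k"
       "\<And>k \<omega>. hlf_x f \<alpha> \<beta> \<eta> r x1 (\<lambda>j. U j \<omega>) k = H.X (\<lambda>j. U' j \<omega>) k"
    by (simp_all add: H.Gk_def[symmetric] H.P_def[symmetric] H.X_def[symmetric]) (intro H.loc_all; simp add: U'_def)+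
  have eqV: "\<forall>i\<in>{1..T}. U' i \<omega> = V i \<omega> \<Longrightarrow> k \<in> {1..T} \<Longrightarrow>
       H.Gk (\<lambda>j. U' j \<omega>) k = H.Gk (\<lambda>j. V j \<omega>) k \<and> H.P (\<lambda>j. U' j \<omega>) k = H.P (\<lambda>j. V j \<omega>) k
       \<and> H.X (\<lambda>j. U' j \<omega>) k = H.X (\<lambda>j. V j \<omega>) k" for k \<omega>
    by (intro conjI H.loc_all) auto
  have Eg: "(\<Sum>k=1..T. integral\<^sup>L M (\<lambda>\<omega>. norm (hlf_g f \<alpha> \<beta> \<eta> r x1 (\<lambda>j. U j \<omega>) k)^2))
      = (\<Sum>k=1..T. integral\<^sup>L M (\<lambda>\<omega>. norm (H.Gk (\<lambda>j. V j \<omega>) k)^2))"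
  proof (intro sum.cong refl)
    fix k assume k: "k \<in> {1..T}"
    show "integral\<^sup>L M (\<lambda>\<omega>. norm (hlf_g f \<alpha> \<beta> \<eta> r x1 (\<lambda>j. U j \<omega>) k)^2) = integral\<^sup>L M (\<lambda>\<omega>. norm (H.Gk (\<lambda>j. V j \<omega>) k)^2)"
      unfolding eqU
    proof (rule integral_cong_AE)
      show "(\<lambda>\<omega>. (norm (H.Gk (\<lambda>j. U' j \<omega>) k))^2) \<in> borel_measurable M"
        using H.meas_G[OF U'm] by measurable
      show "(\<lambda>\<omega>. (norm (H.Gk (\<lambda>j. V j \<omega>) k))^2) \<in> borel_measurable M"
        using H.meas_G[OF Vm] by measurable
      show "AE \<omega> in M. (norm (H.Gk (\<lambda>j. U' j \<omega>) k))^2 = (norm (H.Gk (\<lambda>j. V j \<omega>) k))^2"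
        using AEall by eventually_elim (use eqV k in auto)
    qed
  qed
  have Ep: "(\<Sum>k=1..T. integral\<^sup>L M (\<lambda>\<omega>. norm (hlf_p f \<alpha> \<beta> \<eta> r x1 (\<lambda>j. U j \<omega>) k)^2))
      = (\<Sum>k=1..T. integral\<^sup>L M (\<lambda>\<omega>. norm (H.P (\<lambda>j. V j \<omega>) k)^2))"
  proof (intro sum.cong refl)
    fix k assume k: "k \<in> {1..T}"
    show "integral\<^sup>L M (\<lambda>\<omega>. norm (hlf_p f \<alpha> \<beta> \<eta> r x1 (\<lambda>j. U j \<omega>) k)^2) = integral\<^sup>L M (\<lambda>\<omega>. norm (H.P (\<lambda>j. V j \<omega>) k)^2)"
      unfolding eqU
    proof (rule integral_cong_AE)
      show "(\<lambda>\<omega>. (norm (H.P (\<lambda>j. U' j \<omega>) k))^2) \<in> borel_measurable M"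
        using H.meas_P[OF U'm] by measurable
      show "(\<lambda>\<omega>. (norm (H.P (\<lambda>j. V j \<omega>) k))^2) \<in> borel_measurable M"
        using H.meas_P[OF Vm] by measurable
      show "AE \<omega> in M. (norm (H.P (\<lambda>j. U' j \<omega>) k))^2 = (norm (H.P (\<lambda>j. V j \<omega>) k))^2"
        using AEall by eventually_elim (use eqV k in auto)
    qed
  qed
  have Egr: "(\<Sum>k=1..T. integral\<^sup>L M (\<lambda>\<omega>. norm (grad (hlf_x f \<alpha> \<beta> \<eta> r x1 (\<lambda>j. U j \<omega>) k))^2))
      = (\<Sum>k=1..T. integral\<^sup>L M (\<lambda>\<omega>. norm (grad (H.X (\<lambda>j. V j \<omega>) k))^2))"
  proof (intro sum.cong refl)
    fix k assume k: "k \<in> {1..T}"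
    show "integral\<^sup>L M (\<lambda>\<omega>. norm (grad (hlf_x f \<alpha> \<beta> \<eta> r x1 (\<lambda>j. U j \<omega>) k))^2) = integral\<^sup>L M (\<lambda>\<omega>. norm (grad (H.X (\<lambda>j. V j \<omega>) k))^2)"
      unfolding eqU
    proof (rule integral_cong_AE)
      show "(\<lambda>\<omega>. (norm (grad (H.X (\<lambda>j. U' j \<omega>) k)))^2) \<in> borel_measurable M"
        using measurable_compose[OF H.meas_X[OF U'm] H.grad_meas] by measurable
      show "(\<lambda>\<omega>. (norm (grad (H.X (\<lambda>j. V j \<omega>) k)))^2) \<in> borel_measurable M"
        using measurable_compose[OF H.meas_X[OF Vm] H.grad_meas] by measurable
      show "AE \<omega> in M. (norm (grad (H.X (\<lambda>j. U' j \<omega>) k)))^2 = (norm (grad (H.X (\<lambda>j. V j \<omega>) k)))^2"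
        using AEall by eventually_elim (use eqV k in auto)
    qed
  qed
  show ?thesis
    unfolding Let_def Eg Ep Egr
    using HP.main_V[OF \<theta>, of T] HP.I1[of T] by simp
qed


end
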